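(* Let $d \ge 4$ and $\hat X \in U(d)$. Let $F = \int d\psi\, |\langle\psi|\hat X|\psi\rangle|^2$ and $D = \sqrt{\int d\psi\, |\langle\psi|\hat X|\psi\rangle|^4 - F^2}$. Let $P := |\mathrm{tr}(\hat X)|$ and $Q := |\mathrm{tr}(\hat X^2) + \mathrm{tr}(\hat X)^2|$. Then $(F,D)$ uniquely determines $P$ and $Q$; specifically, $$P^2 = d(d+1)F - d,\qquad Q^2 = d(d+1)(d+2)(d+3)(D^2+F^2) - 2d(d+3) - 4(d+2)P^2.$$
   Context: $d\psi$ denotes the unitarily invariant (Haar-induced) probability measure on unit vectors of $\mathbb{C}^d$. *)

theory Defs
  imports "HOL-Probability.Probability"
begin

definition cadjoint :: "complex^'n^'n \<Rightarrow> complex^'n^'n" where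
  "cadjoint A = (\<chi> i j. cnj (A $ j $ i))"

definition unitary :: "complex^'n^'n \<Rightarrow> bool" where
  "unitary U \<longleftrightarrow> U ** cadjoint U = mat 1 \<and> cadjoint U ** U = mat 1"

definition ctrace :: "complex^'n^'n \<Rightarrow> complex" where
  "ctrace A = (\<Sum>i\<in>UNIV. A $ i $ i)"

definition braket :: "complex^'n \<Rightarrow> complex^'n^'n \<Rightarrow> complex" where
  "braket \<psi> X = (\<Sum>i\<in>UNIV. cnj (\<psi> $ i) * (X *v \<psi>) $ i)"

definition unitarily_invariant_sphere_measure :: "(complex^'n) measure \<Rightarrow> bool" where
  "unitarily_invariant_sphere_measure M \<longleftrightarrow>
     prob_space M \<and>
     sets M = sets (restrict_space borel (sphere 0 1)) \<and>
     space M = sphere 0 1 \<and>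
     (\<forall>U. unitary U \<longrightarrow> distr M M (\<lambda>\<psi>. U *v \<psi>) = M)"

end

theory Submission
  imports Defs "HOL-Combinatorics.Permutations"
begin

definition cinner :: "complex^'n \<Rightarrow> complex^'n \<Rightarrow> complex" where
  "cinner x y = (\<Sum>i\<in>UNIV. cnj (x $ i) * y $ i)"

lemma braket_cinner: "braket \<psi> X = cinner \<psi> (X *v \<psi>)"
  unfolding braket_def cinner_def ..

lemma cinner_adj: "cinner (A *v x) y = cinner x (cadjoint A *v y)"
proof -
  have "cinner (A *v x) y = (\<Sum>i\<in>UNIV. \<Sum>j\<in>UNIV. cnj (A $ i $ j) * cnj (x $ j) * y $ i)"
    unfolding cinner_def matrix_vector_mult_def by (simp add: sum_distrib_right)
  also have "\<dots> = (\<Sum>j\<in>UNIV. \<Sum>i\<in>UNIV. cnj (A $ i $ j) * cnj (x $ j) * y $ i)"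
    by (rule sum.swap)
  also have "\<dots> = cinner x (cadjoint A *v y)"
    unfolding cinner_def matrix_vector_mult_def cadjoint_def by (simp add: sum_distrib_left mult_ac)
  finally show ?thesis .
qed

lemma cinner_unitary: "unitary U \<Longrightarrow> cinner (U *v x) (U *v y) = cinner x y"
  unfolding unitary_def by (simp add: cinner_adj matrix_vector_mul_assoc)

lemma norm_sq_cinner: "complex_of_real (norm x ^ 2) = cinner x x"
proof -
  have "norm x ^ 2 = (\<Sum>i\<in>UNIV. cmod (x $ i) ^ 2)"
    unfolding norm_vec_def L2_set_def by (simp add: sum_nonneg)
  hence "complex_of_real (norm x ^ 2) = (\<Sum>i\<in>UNIV. complex_of_real (cmod (x $ i) ^ 2))" by simp
  also have "\<dots> = cinner x x" unfolding cinner_def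
    by (rule sum.cong) (auto simp del: of_real_power simp add: complex_norm_square mult.commute)
  finally show ?thesis .
qed

lemma norm_unitary: "unitary U \<Longrightarrow> norm (U *v x) = norm x"
proof -
  assume "unitary U"
  hence "complex_of_real (norm (U *v x) ^ 2) = complex_of_real (norm x ^ 2)"
    by (simp only: norm_sq_cinner cinner_unitary)
  hence "norm (U *v x) ^ 2 = norm x ^ 2" using of_real_eq_iff by blast
  thus ?thesis by (simp add: power2_eq_iff_nonneg)
qed

lemma cont_mv: "continuous_on UNIV (\<lambda>x. (A::complex^'n^'n) *v x)"
  unfolding matrix_vector_mult_def by (intro continuous_intros)

locale ism =
  fixes M :: "(complex^'n) measure"
  assumes ism: "unitarily_invariant_sphere_measure M"
begin

lemma prob: "prob_space M" using ism unfolding unitarily_invariant_sphere_measure_def by auto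
lemma space_M: "space M = sphere 0 1" using ism unfolding unitarily_invariant_sphere_measure_def by auto
lemma sets_M: "sets M = sets (restrict_space borel (sphere 0 1))" using ism unfolding unitarily_invariant_sphere_measure_def by auto

lemma meas_cont:
  fixes f :: "complex^'n \<Rightarrow> 'b::{banach,second_countable_topology}"
  assumes "continuous_on UNIV f"
  shows "f \<in> borel_measurable M"
proof -
  have "f \<in> borel_measurable borel" using assms by (simp add: borel_measurable_continuous_onI)
  hence "f \<in> borel_measurable (restrict_space borel (sphere 0 1))"
    by (rule measurable_restrict_space1)
  thus ?thesis using sets_M measurable_cong_sets by blast
qed

lemma int_cont:
  fixes f :: "complex^'n \<Rightarrow> 'b::{banach,second_countable_topology}"
  assumes "continuous_on UNIV f"
  shows "integrable M f"
proof -
  interpret prob_space M by (rule prob)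
  have "compact (f ` sphere 0 1)"
    by (rule compact_continuous_image[OF continuous_on_subset[OF assms]]) auto
  then obtain B where B: "\<forall>y\<in>f ` sphere 0 1. norm y \<le> B"
    using compact_imp_bounded[OF \<open>compact (f ` sphere 0 1)\<close>] unfolding bounded_iff by blast
  show ?thesis
  proof (rule integrable_const_bound[where B=B])
    show "AE x in M. norm (f x) \<le> B" using B space_M by (intro AE_I2) auto
  qed (rule meas_cont[OF assms])
qed

lemma meas_unitary:
  assumes "unitary U"
  shows "(\<lambda>x. U *v x) \<in> measurable M M"
proof -
  have "(\<lambda>x. U *v x) \<in> measurable borel borel"
    by (rule borel_measurable_continuous_onI[OF cont_mv])
  hence "(\<lambda>x. U *v x) \<in> measurable (restrict_space borel (sphere 0 1)) (restrict_space borel (sphere 0 1))"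
    by (rule measurable_restrict_space3) (auto simp: norm_unitary[OF assms])
  thus ?thesis using sets_M measurable_cong_sets by blast
qed

lemma inv:
  fixes f :: "complex^'n \<Rightarrow> 'b::{banach,second_countable_topology}"
  assumes "unitary U" "f \<in> borel_measurable M"
  shows "(\<integral>x. f (U *v x) \<partial>M) = integral\<^sup>L M f"
proof -
  have "distr M M (\<lambda>x. U *v x) = M" using ism assms(1) unfolding unitarily_invariant_sphere_measure_def by auto
  hence "integral\<^sup>L M f = integral\<^sup>L (distr M M (\<lambda>x. U *v x)) f" by simp
  also have "\<dots> = (\<integral>x. f (U *v x) \<partial>M)" by (rule integral_distr[OF meas_unitary[OF assms(1)] assms(2)])
  finally show ?thesis by simp
qed

lemma inv_cont:
  fixes f :: "complex^'n \<Rightarrow> 'b::{banach,second_countable_topology}"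
  assumes "unitary U" "continuous_on UNIV f"
  shows "(\<integral>x. f (U *v x) \<partial>M) = integral\<^sup>L M f"
  by (rule inv[OF assms(1) meas_cont[OF assms(2)]])

lemma AE_norm: "AE x in M. norm x = 1"
  using space_M by (intro AE_I2) auto

end

lemma sum_delta_mult: "(\<Sum>j\<in>(UNIV::'n::finite set). (if i = j then c else 0) * (y j::'a::comm_ring_1)) = c * y i"
proof -
  have "(\<Sum>j\<in>UNIV. (if i = j then c else 0) * y j) = (\<Sum>j\<in>UNIV. if i = j then c * y j else 0)"
    by (rule sum.cong) auto
  thus ?thesis by (simp add: sum.delta sum.delta')
qed

lemma sum_delta_mult': "(\<Sum>j\<in>(UNIV::'n::finite set). (if j = i then c else 0) * (y j::'a::comm_ring_1)) = c * y i"
  using sum_delta_mult[of i c y] by (simp add: eq_commute)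

definition dmat :: "('n \<Rightarrow> complex) \<Rightarrow> complex^'n^'n" where
  "dmat f = (\<chi> i j. if i = j then f i else 0)"

lemma dmat_mult: "dmat f ** dmat g = dmat (\<lambda>i. f i * g i)"
  unfolding dmat_def matrix_matrix_mult_def
  by (simp add: vec_eq_iff sum_delta_mult)

lemma dmat_adj: "cadjoint (dmat f) = dmat (\<lambda>i. cnj (f i))"
  unfolding dmat_def cadjoint_def by (simp add: vec_eq_iff)

lemma dmat_one: "mat 1 = dmat (\<lambda>i. 1)"
  unfolding dmat_def mat_def by (simp add: vec_eq_iff)

lemma dmat_act: "(dmat f *v x) $ i = f i * x $ i"
  unfolding dmat_def matrix_vector_mult_def by (simp add: sum_delta_mult)

lemma unitary_dmat: assumes "\<And>i. cmod (f i) = 1" shows "unitary (dmat f)"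
proof -
  have w: "f i * cnj (f i) = 1" "cnj (f i) * f i = 1" for i using assms[of i]
    by (simp_all add: complex_norm_square[symmetric] mult.commute)
  show ?thesis unfolding unitary_def dmat_adj dmat_mult dmat_one w by simp
qed

definition phase_mat :: "'n \<Rightarrow> complex \<Rightarrow> complex^'n^'n" where
  "phase_mat m w = dmat (\<lambda>i. if i = m then w else 1)"

lemma phase_act: "(phase_mat m w *v x) $ i = (if i = m then w else 1) * x $ i"
  unfolding phase_mat_def dmat_act ..

lemma unitary_phase: assumes "cmod w = 1" shows "unitary (phase_mat m w)"
  unfolding phase_mat_def by (rule unitary_dmat) (simp add: assms)

definition perm_mat :: "('n \<Rightarrow> 'n) \<Rightarrow> complex^'n^'n" where
  "perm_mat p = (\<chi> i j. if j = p i then 1 else 0)"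

lemma perm_act: "(perm_mat p *v x) $ i = x $ (p i)"
  unfolding perm_mat_def matrix_vector_mult_def by (simp add: sum_delta_mult')

lemma unitary_perm: assumes "bij p" shows "unitary (perm_mat p)"
proof -
  have inj: "p i = p j \<longleftrightarrow> i = j" for i j using assms by (meson bij_def injD)
  have A1: "(\<Sum>k\<in>UNIV. (if k = p i then 1 else 0) * cnj (if k = p j then 1 else (0::complex))) = (if i = j then 1 else 0)" for i j
  proof -
    have "(\<Sum>k\<in>UNIV. (if k = p i then 1 else 0) * cnj (if k = p j then 1 else (0::complex))) =
          (\<Sum>k\<in>UNIV. if k = p i then (if i = j then 1 else 0) else 0)"
      by (rule sum.cong) (auto simp: inj)
    thus ?thesis by (simp add: sum.delta)
  qed
  have B1: "(\<Sum>k\<in>UNIV. cnj (if i = p k then 1 else 0) * (if j = p k then 1 else (0::complex))) = (if i = j then 1 else 0)" for i j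
  proof -
    obtain k0 where k0: "p k0 = i" using assms by (metis bij_pointE)
    have "(\<Sum>k\<in>UNIV. cnj (if i = p k then 1 else 0) * (if j = p k then 1 else (0::complex))) =
          (\<Sum>k\<in>UNIV. if k = k0 then (if i = j then 1 else 0) else 0)"
      by (rule sum.cong) (auto simp: k0[symmetric] inj)
    thus ?thesis by (simp add: sum.delta)
  qed
  have A: "perm_mat p ** cadjoint (perm_mat p) = mat 1"
    unfolding perm_mat_def cadjoint_def matrix_matrix_mult_def mat_def
    by (simp add: vec_eq_iff A1)
  have B: "cadjoint (perm_mat p) ** perm_mat p = mat 1"
    unfolding perm_mat_def cadjoint_def matrix_matrix_mult_def mat_def
    by (simp add: vec_eq_iff B1)
  show ?thesis using A B unfolding unitary_def by simp
qed

definition dl :: "'n \<Rightarrow> 'n \<Rightarrow> complex" where "dl a b = (if a = b then 1 else 0)"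

definition sq2 :: complex where "sq2 = complex_of_real (1 / sqrt 2)"

lemma sq2_sq: "sq2 * sq2 = 1/2"
  unfolding sq2_def by (simp flip: of_real_mult)

lemma sq2_sq': "sq2 * (sq2 * 2) = 1"
  using sq2_sq by (metis mult.assoc nonzero_eq_divide_eq zero_neq_numeral)

lemma cnj_sq2[simp]: "cnj sq2 = sq2" unfolding sq2_def by simp

definition rot :: "'n \<Rightarrow> 'n \<Rightarrow> complex^'n^'n" where
  "rot x y = (\<chi> i j. if i = x then sq2 * (dl j x + dl j y) else if i = y then sq2 * (dl j x - dl j y) else dl j i)"

lemma sum_dl: "(\<Sum>j\<in>(UNIV::'n::finite set). dl j a * f j) = f a"
  unfolding dl_def by (simp add: sum_delta_mult')

lemma sum_dl': "(\<Sum>j\<in>(UNIV::'n::finite set). f j * dl j a) = f a"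
  using sum_dl[of a f] by (simp add: mult.commute)

lemma rot_act:
  "(rot x y *v v) $ i = (if i = x then sq2 * (v $ x + v $ y) else if i = y then sq2 * (v $ x - v $ y) else v $ i)"
  unfolding rot_def matrix_vector_mult_def
  by (simp add: algebra_simps sum.distrib sum_subtractf sum_dl sum_dl' flip: sum_distrib_left)

lemma rot_adj: assumes "x \<noteq> y" shows "cadjoint (rot x y) = rot x y"
  unfolding rot_def cadjoint_def using assms by (auto simp: vec_eq_iff dl_def)

lemma unitary_rot: fixes x y :: "'n::finite" assumes "x \<noteq> y" shows "unitary (rot x y)"
proof -
  have "rot x y ** rot x y = mat 1"
  proof (subst matrix_eq, intro allI)
    fix v :: "complex^'n"
    show "(rot x y ** rot x y) *v v = mat 1 *v v"
      unfolding matrix_vector_mul_assoc[symmetric]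
      using assms by (simp add: vec_eq_iff rot_act algebra_simps sq2_sq sq2_sq')
  qed
  thus ?thesis unfolding unitary_def rot_adj[OF assms] by simp
qed

definition mnm :: "(nat \<Rightarrow> 'n) \<Rightarrow> (nat \<Rightarrow> 'n) \<Rightarrow> complex^'n \<Rightarrow> complex" where
  "mnm a b \<psi> = (\<Prod>k<4. cnj (\<psi> $ a k) * \<psi> $ b k)"

definition Wc :: "(nat \<Rightarrow> 'n) \<Rightarrow> (nat \<Rightarrow> 'n) \<Rightarrow> nat" where
  "Wc a b = card {\<sigma>. \<sigma> permutes {..<4} \<and> (\<forall>k<4. b (\<sigma> k) = a k)}"

definition bal :: "(nat \<Rightarrow> 'n) \<Rightarrow> (nat \<Rightarrow> 'n) \<Rightarrow> bool" where
  "bal a b \<longleftrightarrow> image_mset a (mset_set {..<4}) = image_mset b (mset_set {..<4})"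

lemma count_img: "count (image_mset a (mset_set {..<4::nat})) m = card {k. k < 4 \<and> a k = m}"
proof -
  have "count (image_mset a (mset_set {..<4::nat})) m = (\<Sum>y\<in>a -` {m} \<inter> {..<4}. 1)"
    by (simp add: count_image_mset)
  also have "\<dots> = card (a -` {m} \<inter> {..<4})" by simp
  also have "a -` {m} \<inter> {..<4} = {k. k < 4 \<and> a k = m}" by auto
  finally show ?thesis .
qed

lemma bal_perm: assumes "bal a b" obtains \<sigma> where "\<sigma> permutes {..<4}" "\<forall>k<4. b (\<sigma> k) = a k"
proof -
  from image_mset_eq_implies_permutes[of "{..<4}" a b] assms
  obtain p where "p permutes {..<4::nat}" "\<forall>x\<in>{..<4}. a x = b (p x)" unfolding bal_def by auto
  thus ?thesis using that by auto
qed

lemma perm_bal: assumes "\<sigma> permutes {..<4}" "\<forall>k<4. b (\<sigma> k) = a k" shows "bal a b"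
proof -
  have "image_mset a (mset_set {..<4}) = image_mset (b \<circ> \<sigma>) (mset_set {..<4})"
    using assms(2) by (intro image_mset_cong) auto
  also have "\<dots> = image_mset b (image_mset \<sigma> (mset_set {..<4}))" by (simp add: image_mset.compositionality)
  also have "image_mset \<sigma> (mset_set {..<4}) = mset_set (\<sigma> ` {..<4})"
    by (rule image_mset_mset_set) (meson assms(1) permutes_inj_on)
  also have "\<sigma> ` {..<4} = {..<4}" by (rule permutes_image[OF assms(1)])
  finally show ?thesis unfolding bal_def .
qed

lemma Wc_unbal: assumes "\<not> bal a b" shows "Wc a b = 0"
proof -
  have "{\<sigma>. \<sigma> permutes {..<4} \<and> (\<forall>k<4. b (\<sigma> k) = a k)} = {}" using perm_bal assms by blast
  thus ?thesis unfolding Wc_def by (metis card.empty)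
qed

lemma Wc_bal: assumes "bal a b" shows "Wc a b = Wc a a"
proof -
  obtain s where s: "s permutes {..<4}" "\<forall>k<4. b (s k) = a k" using bal_perm[OF assms] by blast
  have "bij_betw (\<lambda>t. s \<circ> t) {t. t permutes {..<4} \<and> (\<forall>k<4. a (t k) = a k)}
                    {\<sigma>. \<sigma> permutes {..<4} \<and> (\<forall>k<4. b (\<sigma> k) = a k)}"
  proof (rule bij_betwI[where g="\<lambda>\<sigma>. inv s \<circ> \<sigma>"])
    show "(\<circ>) s \<in> {t. t permutes {..<4} \<and> (\<forall>k<4. a (t k) = a k)} \<rightarrow> {\<sigma>. \<sigma> permutes {..<4} \<and> (\<forall>k<4. b (\<sigma> k) = a k)}"
    proof
      fix t assume t: "t \<in> {t. t permutes {..<4} \<and> (\<forall>k<4. a (t k) = a k)}"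
      hence "t k < 4" if "k < 4" for k using permutes_in_image[of t "{..<4}"] that by auto
      thus "s \<circ> t \<in> {\<sigma>. \<sigma> permutes {..<4} \<and> (\<forall>k<4. b (\<sigma> k) = a k)}"
        using t s by (auto intro: permutes_compose)
    qed
    show "(\<lambda>\<sigma>. inv s \<circ> \<sigma>) \<in> {\<sigma>. \<sigma> permutes {..<4} \<and> (\<forall>k<4. b (\<sigma> k) = a k)} \<rightarrow> {t. t permutes {..<4} \<and> (\<forall>k<4. a (t k) = a k)}"
    proof
      fix \<sigma> assume sg: "\<sigma> \<in> {\<sigma>. \<sigma> permutes {..<4} \<and> (\<forall>k<4. b (\<sigma> k) = a k)}"
      have sinv: "inv s permutes {..<4}" using s(1) by (rule permutes_inv)
      have "a (inv s (\<sigma> k)) = a k" if "k < 4" for k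
      proof -
        have "\<sigma> k < 4" using permutes_in_image[of \<sigma> "{..<4}"] that sg by auto
        hence "inv s (\<sigma> k) < 4" using permutes_in_image[OF sinv] by auto
        hence "a (inv s (\<sigma> k)) = b (s (inv s (\<sigma> k)))" using s(2) by auto
        also have "\<dots> = b (\<sigma> k)" by (metis s(1) permutes_inverses(1))
        finally show ?thesis using sg that by auto
      qed
      thus "inv s \<circ> \<sigma> \<in> {t. t permutes {..<4} \<and> (\<forall>k<4. a (t k) = a k)}"
        using sg sinv by (auto intro: permutes_compose)
    qed
  qed (auto simp: o_assoc[symmetric] permutes_inverses[OF s(1)] o_def)
  thus ?thesis unfolding Wc_def by (metis (no_types, lifting) bij_betw_same_card)
qed

lemma mnm_bal: assumes "bal a b" shows "mnm a b = mnm a a"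
proof
  fix \<psi> :: "complex^'a"
  obtain s where s: "s permutes {..<4}" "\<forall>k<4. b (s k) = a k" using bal_perm[OF assms] by blast
  have "(\<Prod>k<4. \<psi> $ b k) = (\<Prod>k<4. \<psi> $ b (s k))"
    using prod.permute[OF s(1), of "\<lambda>k. \<psi> $ b k"] by (simp add: o_def)
  also have "\<dots> = (\<Prod>k<4. \<psi> $ a k)" using s(2) by (intro prod.cong) auto
  finally have "(\<Prod>k<4. \<psi> $ b k) = (\<Prod>k<4. \<psi> $ a k)" .
  thus "mnm a b \<psi> = mnm a a \<psi>" unfolding mnm_def prod.distrib by simp
qed

lemma unbal_count: assumes "\<not> bal a b" obtains m where "card {k. k < 4 \<and> a k = m} \<noteq> card {k. k < 4 \<and> b k = m}"
  using assms unfolding bal_def by (metis count_img multiset_eqI)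

lemma prod_if_pow: "(\<Prod>k<(n::nat). if P k then c else 1) = c ^ card {k. k < n \<and> P k}"
proof -
  have "(\<Prod>k<n. if P k then c else 1) = (\<Prod>k\<in>{..<n} \<inter> {k. P k}. c) * (\<Prod>k\<in>{..<n} \<inter> - {k. P k}. 1)"
    by (rule prod.If_cases) simp
  also have "{..<n} \<inter> {k. P k} = {k. k < n \<and> P k}" by auto
  finally show ?thesis by simp
qed

lemma mnm_phase:
  "mnm a b (phase_mat m w *v \<psi>) = cnj w ^ card {k. k < 4 \<and> a k = m} * w ^ card {k. k < 4 \<and> b k = m} * mnm a b \<psi>"
proof -
  have "mnm a b (phase_mat m w *v \<psi>) =
    (\<Prod>k<4. (if a k = m then cnj w else 1) * (if b k = m then w else 1) * (cnj (\<psi> $ a k) * \<psi> $ b k))"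
    unfolding mnm_def phase_act by (intro prod.cong) (auto simp: mult_ac)
  also have "\<dots> = (\<Prod>k<4. if a k = m then cnj w else 1) * (\<Prod>k<4. if b k = m then w else 1) * mnm a b \<psi>"
    unfolding mnm_def prod.distrib ..
  finally show ?thesis unfolding prod_if_pow .
qed

lemma mnm_cont: "continuous_on UNIV (mnm a b)"
  unfolding mnm_def by (intro continuous_intros)

context ism
begin

lemma E_unbal: assumes "\<not> bal a b" shows "integral\<^sup>L M (mnm a b) = 0"
proof -
  obtain m where m: "card {k. k < 4 \<and> a k = m} \<noteq> card {k. k < 4 \<and> b k = m}" using unbal_count[OF assms] by blast
  define ca where "ca = card {k. k < 4 \<and> a k = m}"
  define cb where "cb = card {k. k < 4 \<and> b k = m}"
  define th where "th = pi / (real cb - real ca)"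
  have ne: "real cb - real ca \<noteq> 0" using m unfolding ca_def cb_def by simp
  have c: "cnj (cis th) ^ ca * cis th ^ cb = -1"
  proof -
    have "cnj (cis th) ^ ca * cis th ^ cb = cis (real cb * th - real ca * th)"
    proof -
      have 1: "cis th ^ cb = cis (real cb * th)" by (rule Complex.DeMoivre)
      have 2: "cis (- th) ^ ca = cis (real ca * (- th))" by (rule Complex.DeMoivre)
      show ?thesis unfolding cis_cnj 1 2 cis_mult by (simp add: algebra_simps)
    qed
    also have "real cb * th - real ca * th = (real cb - real ca) * th" by (simp add: algebra_simps)
    also have "\<dots> = pi" unfolding th_def using ne by simp
    finally show ?thesis by simp
  qed
  have "integral\<^sup>L M (mnm a b) = (\<integral>\<psi>. mnm a b (phase_mat m (cis th) *v \<psi>) \<partial>M)"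
    by (rule inv_cont[symmetric]) (auto intro: unitary_phase mnm_cont)
  also have "\<dots> = (\<integral>\<psi>. - mnm a b \<psi> \<partial>M)"
    unfolding mnm_phase using c unfolding ca_def cb_def by simp
  also have "\<dots> = - integral\<^sup>L M (mnm a b)" by simp
  finally show ?thesis by simp
qed

end

lemma exists_perm_ext:
  fixes a a' :: "nat \<Rightarrow> 'n::finite"
  assumes pat: "\<forall>k<4. \<forall>l<4. (a k = a l \<longleftrightarrow> a' k = a' l)"
  obtains p where "bij p" "\<forall>k<4. p (a' k) = a k"
proof -
  define A where "A = a' ` {..<4}"
  define B where "B = a ` {..<4}"
  define g where "g u = a (SOME k. k < 4 \<and> a' k = u)" for u
  have g: "g (a' k) = a k" if "k < 4" for k
  proof -
    have "\<exists>j. j < 4 \<and> a' j = a' k" using that by blast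
    hence "(SOME j. j < 4 \<and> a' j = a' k) < 4 \<and> a' (SOME j. j < 4 \<and> a' j = a' k) = a' k" by (rule someI_ex)
    thus ?thesis unfolding g_def using pat that by blast
  qed
  have bg: "bij_betw g A B"
  proof (rule bij_betw_imageI)
    show "inj_on g A" unfolding A_def inj_on_def using g pat by auto
    show "g ` A = B" unfolding A_def B_def using g by (auto simp: image_iff)
  qed
  have "card A = card B" using bg by (rule bij_betw_same_card)
  hence cc: "card (UNIV - A) = card (UNIV - B)" by (simp add: card_Diff_subset)
  obtain h where bh: "bij_betw h (UNIV - A) (UNIV - B)" using finite_same_card_bij[OF finite finite cc] by blast
  define p where "p u = (if u \<in> A then g u else h u)" for u
  have "bij_betw p A B" using bg by (rule bij_betw_cong[THEN iffD1, rotated]) (auto simp: p_def)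
  moreover have "bij_betw p (UNIV - A) (UNIV - B)" using bh by (rule bij_betw_cong[THEN iffD1, rotated]) (auto simp: p_def)
  ultimately have "bij_betw p (A \<union> (UNIV - A)) (B \<union> (UNIV - B))" by (rule bij_betw_combine) auto
  hence "bij p" by simp
  moreover have "\<forall>k<4. p (a' k) = a k" using g unfolding p_def A_def by auto
  ultimately show ?thesis using that by blast
qed

lemma Wc_pat:
  assumes pat: "\<forall>k<4. \<forall>l<4. (a k = a l \<longleftrightarrow> a' k = a' l)"
  shows "Wc a a = Wc a' a'"
proof -
  have "{\<sigma>. \<sigma> permutes {..<4} \<and> (\<forall>k<4. a (\<sigma> k) = a k)} = {\<sigma>. \<sigma> permutes {..<4} \<and> (\<forall>k<4. a' (\<sigma> k) = a' k)}"
    using pat permutes_in_image[of _ "{..<4::nat}"] by auto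
  thus ?thesis unfolding Wc_def by simp
qed

context ism
begin

lemma E_pat:
  assumes pat: "\<forall>k<4. \<forall>l<4. (a k = a l \<longleftrightarrow> a' k = a' l)"
  shows "integral\<^sup>L M (mnm a a) = integral\<^sup>L M (mnm a' a')"
proof -
  obtain p where p: "bij p" "\<forall>k<4. p (a' k) = a k" using exists_perm_ext[OF pat] by blast
  have "mnm a' a' (perm_mat p *v \<psi>) = mnm a a \<psi>" for \<psi>
    unfolding mnm_def perm_act using p(2) by (intro prod.cong) auto
  hence "integral\<^sup>L M (mnm a a) = (\<integral>\<psi>. mnm a' a' (perm_mat p *v \<psi>) \<partial>M)" by simp
  also have "\<dots> = integral\<^sup>L M (mnm a' a')" by (rule inv_cont) (auto intro: unitary_perm p mnm_cont)
  finally show ?thesis .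
qed

end

definition pl :: "nat list \<Rightarrow> nat \<Rightarrow> nat" where "pl xs k = (if k < 4 then xs ! k else k)"

definition L24 :: "nat list list" where "L24 = [[0,1,2,3], [0,1,3,2], [0,2,1,3], [0,2,3,1], [0,3,1,2], [0,3,2,1], [1,0,2,3], [1,0,3,2], [1,2,0,3], [1,2,3,0], [1,3,0,2], [1,3,2,0], [2,0,1,3], [2,0,3,1], [2,1,0,3], [2,1,3,0], [2,3,0,1], [2,3,1,0], [3,0,1,2], [3,0,2,1], [3,1,0,2], [3,1,2,0], [3,2,0,1], [3,2,1,0]]"

lemma all4: "(\<forall>k<4. P k) \<longleftrightarrow> P 0 \<and> P 1 \<and> P 2 \<and> P (3::nat)"
  by (auto simp: less_Suc_eq numeral_eq_Suc)

lemma L24_props: "distinct L24" "\<forall>xs\<in>set L24. length xs = 4 \<and> distinct xs \<and> set xs = {..<4}"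
proof -
  have l4: "{..<4::nat} = {0,1,2,3}" by (auto simp: less_Suc_eq numeral_eq_Suc)
  show "distinct L24" unfolding L24_def by simp
  show "\<forall>xs\<in>set L24. length xs = 4 \<and> distinct xs \<and> set xs = {..<4}" unfolding L24_def l4 by auto
qed

lemma pl_permutes: assumes "length xs = 4" "distinct xs" "set xs = {..<4}" shows "pl xs permutes {..<4}"
proof (rule bij_imp_permutes)
  show "bij_betw (pl xs) {..<4} {..<4}"
  proof (rule bij_betw_imageI)
    show "inj_on (pl xs) {..<4}" unfolding inj_on_def pl_def using assms by (simp add: nth_eq_iff_index_eq)
    have "pl xs ` {..<4} = (\<lambda>k. xs ! k) ` {..<length xs}" unfolding pl_def using assms(1) by auto
    also have "\<dots> = set xs" by (metis atLeast_upt image_set map_nth set_map)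
    finally show "pl xs ` {..<4} = {..<4}" using assms by simp
  qed
qed (simp add: pl_def)

lemma pl_inj: "inj_on pl (set L24)"
proof (rule inj_onI)
  fix xs ys assume xs: "xs \<in> set L24" and ys: "ys \<in> set L24" and e: "pl xs = pl ys"
  have "xs ! k = ys ! k" if "k < 4" for k using fun_cong[OF e, of k] that by (simp add: pl_def)
  thus "xs = ys" using xs ys L24_props(2) by (metis nth_equalityI)
qed

lemma perms4: "{\<sigma>. \<sigma> permutes {..<4::nat}} = pl ` set L24"
proof -
  have sub: "pl ` set L24 \<subseteq> {\<sigma>. \<sigma> permutes {..<4::nat}}" using L24_props(2) pl_permutes by auto
  have "card (pl ` set L24) = card (set L24)" by (rule card_image[OF pl_inj])
  also have "\<dots> = length L24" using L24_props(1) by (rule distinct_card)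
  also have "\<dots> = fact 4" unfolding L24_def by (simp add: fact_numeral)
  also have "\<dots> = card {\<sigma>. \<sigma> permutes {..<4::nat}}" by (rule card_permutations[symmetric]) auto
  finally show ?thesis using sub by (intro card_subset_eq[symmetric]) (auto simp: finite_permutations)
qed

lemma Wc_list: "Wc a b = (\<Sum>xs\<leftarrow>L24. if b (xs ! 0) = a 0 \<and> b (xs ! 1) = a 1 \<and> b (xs ! 2) = a 2 \<and> b (xs ! 3) = a 3 then 1 else 0)"
proof -
  have "Wc a b = card {\<sigma> \<in> pl ` set L24. \<forall>k<4. b (\<sigma> k) = a k}"
    unfolding Wc_def using perms4 by (metis (no_types, lifting) Collect_cong mem_Collect_eq)
  also have "{\<sigma> \<in> pl ` set L24. \<forall>k<4. b (\<sigma> k) = a k} = pl ` {xs \<in> set L24. \<forall>k<4. b (pl xs k) = a k}" by auto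
  also have "card \<dots> = card {xs \<in> set L24. \<forall>k<4. b (pl xs k) = a k}"
    by (rule card_image) (rule inj_on_subset[OF pl_inj], auto)
  also have "\<dots> = (\<Sum>xs\<in>set L24. if (\<forall>k<4. b (pl xs k) = a k) then 1 else 0)"
    by (simp add: sum.If_cases Int_def)
  also have "\<dots> = (\<Sum>xs\<leftarrow>L24. if (\<forall>k<4. b (pl xs k) = a k) then 1 else 0)"
    by (rule sum.distinct_set_conv_list[OF L24_props(1)])
  also have "\<dots> = (\<Sum>xs\<leftarrow>L24. if b (xs ! 0) = a 0 \<and> b (xs ! 1) = a 1 \<and> b (xs ! 2) = a 2 \<and> b (xs ! 3) = a 3 then 1 else 0)"
    by (simp only: all4 pl_def) simp
  finally show ?thesis .
qed

definition pc :: "'n \<Rightarrow> complex^'n \<Rightarrow> complex" where "pc u \<psi> = cnj (\<psi> $ u) * \<psi> $ u"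
definition wv :: "'n \<Rightarrow> 'n \<Rightarrow> complex^'n \<Rightarrow> complex" where "wv u u' \<psi> = cnj (\<psi> $ u) * \<psi> $ u'"

lemma pc_cont[continuous_intros]: "continuous_on UNIV (pc u)"
  unfolding pc_def by (intro continuous_intros)
lemma wv_cont[continuous_intros]: "continuous_on UNIV (wv u u')"
  unfolding wv_def by (intro continuous_intros)

lemma cnj_mult_self: "cmod c = 1 \<Longrightarrow> cnj c * c = 1"
  by (simp add: complex_norm_square[symmetric] mult.commute)

context ism
begin

lemma neg_inv:
  fixes U :: "complex^'n^'n" and h :: "complex^'n \<Rightarrow> complex"
  assumes "unitary U" "continuous_on UNIV h" "\<And>\<psi>. h (U *v \<psi>) = - h \<psi>"
  shows "integral\<^sup>L M h = 0"
proof -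
  have "integral\<^sup>L M h = (\<integral>\<psi>. h (U *v \<psi>) \<partial>M)" by (rule inv_cont[OF assms(1,2), symmetric])
  also have "\<dots> = - integral\<^sup>L M h" unfolding assms(3) by simp
  finally show ?thesis by simp
qed

end

locale rotctx = ism M for M :: "(complex^'n) measure" +
  fixes x y :: 'n and G :: "complex^'n \<Rightarrow> complex"
  assumes xy: "x \<noteq> y" and Gc: "continuous_on UNIV G"
  and GR: "\<And>\<psi>. G (rot x y *v \<psi>) = G \<psi>"
  and GP: "\<And>c \<psi>. cmod c = 1 \<Longrightarrow> G (phase_mat x c *v \<psi>) = G \<psi>"
begin

definition S where "S \<psi> = (pc x \<psi> + pc y \<psi>) / 2"

lemma S_cont[continuous_intros]: "continuous_on UNIV S"
  unfolding S_def by (intro continuous_intros) auto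

lemma Tzero:
  assumes "j \<noteq> l"
  shows "(\<integral>\<psi>. S \<psi> ^ a * wv x y \<psi> ^ j * wv y x \<psi> ^ l * G \<psi> \<partial>M) = 0"
proof -
  define th where "th = pi / (real l - real j)"
  have ne: "real l - real j \<noteq> 0" using assms by simp
  define c where "c = cis th"
  have cm: "cmod c = 1" unfolding c_def by simp
  have c: "cnj c ^ j * c ^ l = -1"
  proof -
    have 1: "cis th ^ l = cis (real l * th)" by (rule Complex.DeMoivre)
    have 2: "cis (- th) ^ j = cis (real j * (- th))" by (rule Complex.DeMoivre)
    have "cnj c ^ j * c ^ l = cis ((real l - real j) * th)" unfolding c_def cis_cnj 1 2 cis_mult
      by (simp add: algebra_simps)
    also have "(real l - real j) * th = pi" unfolding th_def using ne by simp
    finally show ?thesis by simp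
  qed
  have pcx: "pc x (phase_mat x c *v \<psi>) = pc x \<psi>" for \<psi>
    unfolding pc_def phase_act using cnj_mult_self[OF cm] by (simp add: algebra_simps)
  have pcy: "pc y (phase_mat x c *v \<psi>) = pc y \<psi>" for \<psi>
    unfolding pc_def phase_act using xy by simp
  have w1: "wv x y (phase_mat x c *v \<psi>) = cnj c * wv x y \<psi>" for \<psi>
    unfolding wv_def phase_act using xy by simp
  have w2: "wv y x (phase_mat x c *v \<psi>) = c * wv y x \<psi>" for \<psi>
    unfolding wv_def phase_act using xy by simp
  show ?thesis
  proof (rule neg_inv[OF unitary_phase[OF cm]])
    show "continuous_on UNIV (\<lambda>\<psi>. S \<psi> ^ a * wv x y \<psi> ^ j * wv y x \<psi> ^ l * G \<psi>)"
      by (intro continuous_intros Gc)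
    fix \<psi>
    have "S (phase_mat x c *v \<psi>) = S \<psi>" unfolding S_def pcx pcy ..
    hence "S (phase_mat x c *v \<psi>) ^ a * wv x y (phase_mat x c *v \<psi>) ^ j * wv y x (phase_mat x c *v \<psi>) ^ l * G (phase_mat x c *v \<psi>)
      = (cnj c ^ j * c ^ l) * (S \<psi> ^ a * wv x y \<psi> ^ j * wv y x \<psi> ^ l * G \<psi>)"
      unfolding w1 w2 GP[OF cm] by (simp add: power_mult_distrib mult_ac)
    thus "S (phase_mat x c *v \<psi>) ^ a * wv x y (phase_mat x c *v \<psi>) ^ j * wv y x (phase_mat x c *v \<psi>) ^ l * G (phase_mat x c *v \<psi>)
      = - (S \<psi> ^ a * wv x y \<psi> ^ j * wv y x \<psi> ^ l * G \<psi>)" unfolding c by simp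
  qed
qed

lemma pc_rot: "pc x (rot x y *v \<psi>) = S \<psi> + (wv x y \<psi> + wv y x \<psi>) / 2"
proof -
  have "pc x (rot x y *v \<psi>) = (cnj sq2 * sq2) * (cnj (\<psi> $ x + \<psi> $ y) * (\<psi> $ x + \<psi> $ y))"
    unfolding pc_def rot_act by (simp add: mult_ac)
  also have "\<dots> = S \<psi> + (wv x y \<psi> + wv y x \<psi>) / 2"
    unfolding cnj_sq2 sq2_sq S_def pc_def wv_def by (simp add: algebra_simps add_divide_distrib)
  finally show ?thesis .
qed

lemma rot_expand:
  "(\<integral>\<psi>. pc x \<psi> ^ n * G \<psi> \<partial>M) =
   (\<Sum>k\<le>n. \<Sum>j\<le>k. of_nat (n choose k) * of_nat (k choose j) / 2 ^ k *
       (\<integral>\<psi>. S \<psi> ^ (n - k) * wv x y \<psi> ^ j * wv y x \<psi> ^ (k - j) * G \<psi> \<partial>M))"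
proof -
  have "(\<integral>\<psi>. pc x \<psi> ^ n * G \<psi> \<partial>M) = (\<integral>\<psi>. pc x (rot x y *v \<psi>) ^ n * G (rot x y *v \<psi>) \<partial>M)"
    by (rule inv_cont[symmetric]) (auto intro!: unitary_rot xy continuous_intros Gc)
  also have "\<dots> = (\<integral>\<psi>. (\<Sum>k\<le>n. \<Sum>j\<le>k. of_nat (n choose k) * of_nat (k choose j) / 2 ^ k *
       (S \<psi> ^ (n - k) * wv x y \<psi> ^ j * wv y x \<psi> ^ (k - j) * G \<psi>)) \<partial>M)"
  proof (rule Bochner_Integration.integral_cong[OF refl])
    fix \<psi>
    have "pc x (rot x y *v \<psi>) ^ n = ((wv x y \<psi> + wv y x \<psi>) / 2 + S \<psi>) ^ n" unfolding pc_rot by (simp add: add.commute)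
    also have "\<dots> = (\<Sum>k\<le>n. of_nat (n choose k) * ((wv x y \<psi> + wv y x \<psi>) / 2) ^ k * S \<psi> ^ (n - k))"
      by (rule binomial_ring)
    also have "\<dots> = (\<Sum>k\<le>n. of_nat (n choose k) / 2 ^ k * (\<Sum>j\<le>k. of_nat (k choose j) * wv x y \<psi> ^ j * wv y x \<psi> ^ (k - j)) * S \<psi> ^ (n - k))"
      by (simp add: binomial_ring power_divide)
    finally show "pc x (rot x y *v \<psi>) ^ n * G (rot x y *v \<psi>) = (\<Sum>k\<le>n. \<Sum>j\<le>k. of_nat (n choose k) * of_nat (k choose j) / 2 ^ k *
       (S \<psi> ^ (n - k) * wv x y \<psi> ^ j * wv y x \<psi> ^ (k - j) * G \<psi>))"
      unfolding GR by (simp add: sum_distrib_left sum_distrib_right mult_ac)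
  qed
  also have "\<dots> = (\<Sum>k\<le>n. \<Sum>j\<le>k. of_nat (n choose k) * of_nat (k choose j) / 2 ^ k *
       (\<integral>\<psi>. S \<psi> ^ (n - k) * wv x y \<psi> ^ j * wv y x \<psi> ^ (k - j) * G \<psi> \<partial>M))"
  proof -
    have int: "integrable M (\<lambda>\<psi>. S \<psi> ^ (n - k) * wv x y \<psi> ^ j * wv y x \<psi> ^ (k - j) * G \<psi>)" for k j
      by (intro int_cont continuous_intros Gc)
    show ?thesis by (simp add: integral_sum int integrable_sum)
  qed
  finally show ?thesis .
qed

definition Q where "Q \<alpha> \<beta> = (\<integral>\<psi>. pc x \<psi> ^ \<alpha> * pc y \<psi> ^ \<beta> * G \<psi> \<partial>M)"

lemma Sbal:
  "(\<integral>\<psi>. S \<psi> ^ m * wv x y \<psi> ^ j * wv y x \<psi> ^ j * G \<psi> \<partial>M) =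
   (\<Sum>i\<le>m. of_nat (m choose i) / 2 ^ m * Q (i + j) (m - i + j))"
proof -
  have "(\<integral>\<psi>. S \<psi> ^ m * wv x y \<psi> ^ j * wv y x \<psi> ^ j * G \<psi> \<partial>M) =
        (\<integral>\<psi>. (\<Sum>i\<le>m. of_nat (m choose i) / 2 ^ m * (pc x \<psi> ^ (i + j) * pc y \<psi> ^ (m - i + j) * G \<psi>)) \<partial>M)"
  proof (rule Bochner_Integration.integral_cong[OF refl])
    fix \<psi>
    have ww: "wv x y \<psi> ^ j * wv y x \<psi> ^ j = pc x \<psi> ^ j * pc y \<psi> ^ j"
      unfolding wv_def pc_def by (simp add: power_mult_distrib mult_ac)
    have "S \<psi> ^ m = (\<Sum>i\<le>m. of_nat (m choose i) / 2 ^ m * (pc x \<psi> ^ i * pc y \<psi> ^ (m - i)))"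
      unfolding S_def power_divide binomial_ring by (simp add: sum_divide_distrib mult_ac)
    hence "S \<psi> ^ m * wv x y \<psi> ^ j * wv y x \<psi> ^ j * G \<psi> =
          (\<Sum>i\<le>m. of_nat (m choose i) / 2 ^ m * (pc x \<psi> ^ i * pc y \<psi> ^ (m - i))) * (pc x \<psi> ^ j * pc y \<psi> ^ j) * G \<psi>"
      using ww by (simp add: mult.assoc)
    also have "\<dots> = (\<Sum>i\<le>m. of_nat (m choose i) / 2 ^ m * (pc x \<psi> ^ i * pc y \<psi> ^ (m - i)) * (pc x \<psi> ^ j * pc y \<psi> ^ j) * G \<psi>)"
      by (simp add: sum_distrib_right)
    also have "\<dots> = (\<Sum>i\<le>m. of_nat (m choose i) / 2 ^ m * (pc x \<psi> ^ (i + j) * pc y \<psi> ^ (m - i + j) * G \<psi>))"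
      by (intro sum.cong refl) (simp only: power_add mult_ac)
    finally show "S \<psi> ^ m * wv x y \<psi> ^ j * wv y x \<psi> ^ j * G \<psi> =
          (\<Sum>i\<le>m. of_nat (m choose i) / 2 ^ m * (pc x \<psi> ^ (i + j) * pc y \<psi> ^ (m - i + j) * G \<psi>))" .
  qed
  also have "\<dots> = (\<Sum>i\<le>m. of_nat (m choose i) / 2 ^ m * Q (i + j) (m - i + j))"
  proof -
    have int: "integrable M (\<lambda>\<psi>. pc x \<psi> ^ a * pc y \<psi> ^ b * G \<psi>)" for a b
      by (intro int_cont continuous_intros Gc)
    show ?thesis by (simp add: integral_sum int Q_def)
  qed
  finally show ?thesis .
qed

lemma rot_rel:
  "Q n 0 = (\<Sum>k\<le>n. \<Sum>j\<le>k. of_nat (n choose k) * of_nat (k choose j) / 2 ^ k *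
       (if j = k - j then (\<Sum>i\<le>n - k. of_nat ((n - k) choose i) / 2 ^ (n - k) * Q (i + j) (n - k - i + j)) else 0))"
proof -
  have "Q n 0 = (\<integral>\<psi>. pc x \<psi> ^ n * G \<psi> \<partial>M)" unfolding Q_def by simp
  also have "\<dots> = (\<Sum>k\<le>n. \<Sum>j\<le>k. of_nat (n choose k) * of_nat (k choose j) / 2 ^ k *
       (\<integral>\<psi>. S \<psi> ^ (n - k) * wv x y \<psi> ^ j * wv y x \<psi> ^ (k - j) * G \<psi> \<partial>M))" by (rule rot_expand)
  also have "\<dots> = (\<Sum>k\<le>n. \<Sum>j\<le>k. of_nat (n choose k) * of_nat (k choose j) / 2 ^ k *
       (if j = k - j then (\<Sum>i\<le>n - k. of_nat ((n - k) choose i) / 2 ^ (n - k) * Q (i + j) (n - k - i + j)) else 0))"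
  proof (intro sum.cong refl)
    fix k j :: nat assume "j \<in> {..k}"
    show "of_nat (n choose k) * of_nat (k choose j) / 2 ^ k * (\<integral>\<psi>. S \<psi> ^ (n - k) * wv x y \<psi> ^ j * wv y x \<psi> ^ (k - j) * G \<psi> \<partial>M) =
          of_nat (n choose k) * of_nat (k choose j) / 2 ^ k *
       (if j = k - j then (\<Sum>i\<le>n - k. of_nat ((n - k) choose i) / 2 ^ (n - k) * Q (i + j) (n - k - i + j)) else 0)"
    proof (cases "j = k - j")
      case True
      hence kj: "k - j = j" by simp
      show ?thesis unfolding kj using Sbal[of "n - k" j] by simp
    next
      case False
      thus ?thesis using Tzero[of j "k - j" "n - k"] by simp
    qed
  qed
  finally show ?thesis .
qed

lemma rot4: "Q 4 0 = (Q 4 0 + 4 * Q 3 1 + 6 * Q 2 2 + 4 * Q 1 3 + Q 0 4) / 16 + 3/4 * (Q 3 1 + 2 * Q 2 2 + Q 1 3) + 3/8 * Q 2 2"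
proof -
  have "Q 4 0 = (Q 4 0 + 4 * Q 3 1 + 6 * Q 2 2 + 4 * Q 1 3 + Q 0 4) / 16 + 3/4 * (Q 3 1 + 2 * Q 2 2 + Q 1 3) + 3/8 * Q 2 2"
    using rot_rel[of 4] by (simp add: atMost_Suc numeral_eq_Suc field_simps) algebra
  thus ?thesis .
qed

lemma rot3: "Q 3 0 = (Q 3 0 + 3 * Q 2 1 + 3 * Q 1 2 + Q 0 3) / 8 + 3/4 * (Q 1 2 + Q 2 1)"
proof -
  have "Q 3 0 = (Q 3 0 + 3 * Q 2 1 + 3 * Q 1 2 + Q 0 3) / 8 + 3/4 * (Q 1 2 + Q 2 1)"
    using rot_rel[of 3] by (simp add: atMost_Suc numeral_eq_Suc field_simps) algebra
  thus ?thesis .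
qed

lemma rot2: "Q 2 0 = (Q 2 0 + 2 * Q 1 1 + Q 0 2) / 4 + 1/2 * Q 1 1"
proof -
  have "Q 2 0 = (Q 2 0 + 2 * Q 1 1 + Q 0 2) / 4 + 1/2 * Q 1 1"
    using rot_rel[of 2] by (simp add: atMost_Suc numeral_eq_Suc field_simps)
  thus ?thesis .
qed

end

definition lst4 :: "'a \<Rightarrow> 'a \<Rightarrow> 'a \<Rightarrow> 'a \<Rightarrow> nat \<Rightarrow> 'a" where "lst4 p q r s = (\<lambda>k. [p,q,r,s] ! k)"

lemma prod4: "(\<Prod>k<(4::nat). f k) = f 0 * f 1 * f 2 * (f 3 :: 'a::comm_monoid_mult)"
  by (simp add: numeral_eq_Suc lessThan_Suc mult_ac)

lemma mnm_lst4: "mnm (lst4 p q r s) (lst4 p q r s) = (\<lambda>\<psi>. pc p \<psi> * pc q \<psi> * pc r \<psi> * pc s \<psi>)"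
  unfolding mnm_def lst4_def prod4 pc_def by simp

lemma pc_rot_other: "z \<noteq> x \<Longrightarrow> z \<noteq> y \<Longrightarrow> pc z (rot x y *v \<psi>) = pc z \<psi>"
  unfolding pc_def rot_act by simp

lemma pc_phase_other: "z \<noteq> x \<Longrightarrow> pc z (phase_mat x c *v \<psi>) = pc z \<psi>"
  unfolding pc_def phase_act by simp

context ism
begin

definition Mo4 where "Mo4 p q r s = (\<integral>\<psi>. pc p \<psi> * pc q \<psi> * pc r \<psi> * pc s \<psi> \<partial>M)"

lemma Mo4_pat:
  assumes "\<forall>k<4. \<forall>l<4. (lst4 p q r s k = lst4 p q r s l \<longleftrightarrow> lst4 p' q' r' s' k = lst4 p' q' r' s' l)"
  shows "Mo4 p q r s = Mo4 p' q' r' s'"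
  using E_pat[OF assms] unfolding mnm_lst4 Mo4_def .

lemma Mo4_pat':
  assumes "(p = q \<longleftrightarrow> p' = q')" "(p = r \<longleftrightarrow> p' = r')" "(p = s \<longleftrightarrow> p' = s')"
          "(q = r \<longleftrightarrow> q' = r')" "(q = s \<longleftrightarrow> q' = s')" "(r = s \<longleftrightarrow> r' = s')"
  shows "Mo4 p q r s = Mo4 p' q' r' s'"
  by (rule Mo4_pat) (use assms in \<open>auto simp: all4 lst4_def\<close>)

lemma Mo4_c1: "Mo4 p q r s = Mo4 q p r s" unfolding Mo4_def by (simp add: mult_ac)
lemma Mo4_c2: "Mo4 p q r s = Mo4 p r q s" unfolding Mo4_def by (simp add: mult_ac)
lemma Mo4_c3: "Mo4 p q r s = Mo4 p q s r" unfolding Mo4_def by (simp add: mult_ac)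

end

locale quad = ism M for M :: "(complex^'n) measure" +
  fixes x y z w :: 'n
  assumes dist: "distinct [x,y,z,w]"
begin

lemma rel1: "Mo4 x x x x = (2 * Mo4 x x x x + 8 * Mo4 x x x y + 6 * Mo4 x x y y) / 16 + 3/4 * (2 * Mo4 x x x y + 2 * Mo4 x x y y) + 3/8 * Mo4 x x y y"
proof -
  interpret R: rotctx M x y "\<lambda>_. 1"
    by unfold_locales (use dist in \<open>auto intro: continuous_intros\<close>)
  have q: "R.Q a b = (\<integral>\<psi>. pc x \<psi> ^ a * pc y \<psi> ^ b \<partial>M)" for a b unfolding R.Q_def by simp
  have e40: "R.Q 4 0 = Mo4 x x x x" unfolding q Mo4_def by (simp add: eval_nat_numeral mult_ac)
  have e31: "R.Q 3 1 = Mo4 x x x y" unfolding q Mo4_def by (simp add: eval_nat_numeral mult_ac)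
  have e22: "R.Q 2 2 = Mo4 x x y y" unfolding q Mo4_def by (simp add: eval_nat_numeral mult_ac)
  have e13: "R.Q 1 3 = Mo4 x x x y"
  proof -
    have "R.Q 1 3 = Mo4 x y y y" unfolding q Mo4_def by (simp add: eval_nat_numeral mult_ac)
    also have "\<dots> = Mo4 y x x x" by (rule Mo4_pat') (use dist in auto)
    also have "\<dots> = Mo4 x x x y" by (metis Mo4_c1 Mo4_c2 Mo4_c3)
    finally show ?thesis .
  qed
  have e04: "R.Q 0 4 = Mo4 x x x x"
  proof -
    have "R.Q 0 4 = Mo4 y y y y" unfolding q Mo4_def by (simp add: eval_nat_numeral mult_ac)
    also have "\<dots> = Mo4 x x x x" by (rule Mo4_pat') auto
    finally show ?thesis .
  qed
  show ?thesis using R.rot4 unfolding e40 e31 e22 e13 e04 by (simp add: algebra_simps)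
qed

lemma rel2: "Mo4 x x x y = (2 * Mo4 x x x y + 6 * Mo4 x x y z) / 8 + 3/4 * (2 * Mo4 x x y z)"
proof -
  interpret R: rotctx M x y "pc z"
    by unfold_locales (use dist in \<open>auto intro: continuous_intros simp: pc_rot_other pc_phase_other\<close>)
  have q: "R.Q a b = (\<integral>\<psi>. pc x \<psi> ^ a * pc y \<psi> ^ b * pc z \<psi> \<partial>M)" for a b unfolding R.Q_def by simp
  have e30: "R.Q 3 0 = Mo4 x x x y"
  proof -
    have "R.Q 3 0 = Mo4 x x x z" unfolding q Mo4_def by (simp add: eval_nat_numeral mult_ac)
    also have "\<dots> = Mo4 x x x y" by (rule Mo4_pat') (use dist in auto)
    finally show ?thesis .
  qed
  have e21: "R.Q 2 1 = Mo4 x x y z" unfolding q Mo4_def by (simp add: eval_nat_numeral mult_ac)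
  have e12: "R.Q 1 2 = Mo4 x x y z"
  proof -
    have "R.Q 1 2 = Mo4 y y x z" unfolding q Mo4_def by (simp add: eval_nat_numeral mult_ac)
    also have "\<dots> = Mo4 x x y z" by (rule Mo4_pat') (use dist in auto)
    finally show ?thesis .
  qed
  have e03: "R.Q 0 3 = Mo4 x x x y"
  proof -
    have "R.Q 0 3 = Mo4 y y y z" unfolding q Mo4_def by (simp add: eval_nat_numeral mult_ac)
    also have "\<dots> = Mo4 x x x y" by (rule Mo4_pat') (use dist in auto)
    finally show ?thesis .
  qed
  show ?thesis using R.rot3 unfolding e30 e21 e12 e03 by (simp add: algebra_simps)
qed

lemma rel3: "Mo4 x x y y = (2 * Mo4 x x y y + 2 * Mo4 x x y z) / 4 + 1/2 * Mo4 x x y z"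
proof -
  interpret R: rotctx M x y "\<lambda>\<psi>. pc z \<psi> ^ 2"
    by unfold_locales (use dist in \<open>auto intro: continuous_intros simp: pc_rot_other pc_phase_other\<close>)
  have q: "R.Q a b = (\<integral>\<psi>. pc x \<psi> ^ a * pc y \<psi> ^ b * pc z \<psi> ^ 2 \<partial>M)" for a b unfolding R.Q_def by simp
  have e20: "R.Q 2 0 = Mo4 x x y y"
  proof -
    have "R.Q 2 0 = Mo4 x x z z" unfolding q Mo4_def by (simp add: eval_nat_numeral mult_ac)
    also have "\<dots> = Mo4 x x y y" by (rule Mo4_pat') (use dist in auto)
    finally show ?thesis .
  qed
  have e11: "R.Q 1 1 = Mo4 x x y z"
  proof -
    have "R.Q 1 1 = Mo4 z z x y" unfolding q Mo4_def by (simp add: eval_nat_numeral mult_ac)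
    also have "\<dots> = Mo4 x x y z" by (rule Mo4_pat') (use dist in auto)
    finally show ?thesis .
  qed
  have e02: "R.Q 0 2 = Mo4 x x y y"
  proof -
    have "R.Q 0 2 = Mo4 y y z z" unfolding q Mo4_def by (simp add: eval_nat_numeral mult_ac)
    also have "\<dots> = Mo4 x x y y" by (rule Mo4_pat') (use dist in auto)
    finally show ?thesis .
  qed
  show ?thesis using R.rot2 unfolding e20 e11 e02 by (simp add: algebra_simps)
qed

lemma rel4: "Mo4 x x y z = (2 * Mo4 x x y z + 2 * Mo4 x y z w) / 4 + 1/2 * Mo4 x y z w"
proof -
  interpret R: rotctx M x y "\<lambda>\<psi>. pc z \<psi> * pc w \<psi>"
    by unfold_locales (use dist in \<open>auto intro: continuous_intros simp: pc_rot_other pc_phase_other\<close>)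
  have q: "R.Q a b = (\<integral>\<psi>. pc x \<psi> ^ a * pc y \<psi> ^ b * (pc z \<psi> * pc w \<psi>) \<partial>M)" for a b unfolding R.Q_def by simp
  have e20: "R.Q 2 0 = Mo4 x x y z"
  proof -
    have "R.Q 2 0 = Mo4 x x z w" unfolding q Mo4_def by (simp add: eval_nat_numeral mult_ac)
    also have "\<dots> = Mo4 x x y z" by (rule Mo4_pat') (use dist in auto)
    finally show ?thesis .
  qed
  have e11: "R.Q 1 1 = Mo4 x y z w" unfolding q Mo4_def by (simp add: eval_nat_numeral mult_ac)
  have e02: "R.Q 0 2 = Mo4 x x y z"
  proof -
    have "R.Q 0 2 = Mo4 y y z w" unfolding q Mo4_def by (simp add: eval_nat_numeral mult_ac)
    also have "\<dots> = Mo4 x x y z" by (rule Mo4_pat') (use dist in auto)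
    finally show ?thesis .
  qed
  show ?thesis using R.rot2 unfolding e20 e11 e02 by (simp add: algebra_simps)
qed

definition "eE = Mo4 x y z w"

lemma vals: "Mo4 x x y z = 2 * eE" "Mo4 x x y y = 4 * eE" "Mo4 x x x y = 6 * eE" "Mo4 x x x x = 24 * eE"
proof -
  show D: "Mo4 x x y z = 2 * eE" using rel4 unfolding eE_def by algebra
  show C: "Mo4 x x y y = 4 * eE" using rel3 D by algebra
  show B: "Mo4 x x x y = 6 * eE" using rel2 D by algebra
  show "Mo4 x x x x = 24 * eE" using rel1 B C by algebra
qed

lemma Aval: "Mo4 u u u u = 24 * eE"
proof -
  have "Mo4 u u u u = Mo4 x x x x" by (rule Mo4_pat') auto
  thus ?thesis using vals by simp
qed

lemma Bval: "u \<noteq> v \<Longrightarrow> Mo4 u u u v = 6 * eE"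
proof -
  assume "u \<noteq> v"
  hence "Mo4 u u u v = Mo4 x x x y" by (intro Mo4_pat') (use dist in auto)
  thus ?thesis using vals by simp
qed

lemma Cval: "u \<noteq> v \<Longrightarrow> Mo4 u u v v = 4 * eE"
proof -
  assume "u \<noteq> v"
  hence "Mo4 u u v v = Mo4 x x y y" by (intro Mo4_pat') (use dist in auto)
  thus ?thesis using vals by simp
qed

lemma Dval: "u \<noteq> v \<Longrightarrow> u \<noteq> t \<Longrightarrow> v \<noteq> t \<Longrightarrow> Mo4 u u v t = 2 * eE"
proof -
  assume "u \<noteq> v" "u \<noteq> t" "v \<noteq> t"
  hence "Mo4 u u v t = Mo4 x x y z" by (intro Mo4_pat') (use dist in auto)
  thus ?thesis using vals by simp
qed

lemma Evl: "u \<noteq> v \<Longrightarrow> u \<noteq> t \<Longrightarrow> u \<noteq> o1 \<Longrightarrow> v \<noteq> t \<Longrightarrow> v \<noteq> o1 \<Longrightarrow> t \<noteq> o1 \<Longrightarrow> Mo4 u v t o1 = eE"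
proof -
  assume "u \<noteq> v" "u \<noteq> t" "u \<noteq> o1" "v \<noteq> t" "v \<noteq> o1" "t \<noteq> o1"
  hence "Mo4 u v t o1 = Mo4 x y z w" by (intro Mo4_pat') (use dist in auto)
  thus ?thesis unfolding eE_def .
qed

lemma P0:
  assumes "p = q" "p = r" "p = s" "q = r" "q = s" "r = s"
  shows "Mo4 p q r s = eE * of_nat (Wc (lst4 p q r s) (lst4 p q r s))"
proof -
  have W: "Wc (lst4 p q r s) (lst4 p q r s) = 24" using assms by (simp add: Wc_list L24_def lst4_def)
  have "Mo4 p q r s = Mo4 p p p p" using assms unfolding Mo4_def by (simp add: mult_ac)
  also have "\<dots> = 24 * eE" using assms by (simp add: Aval)
  finally show ?thesis unfolding W by simp
qed

lemma P1:
  assumes "p \<noteq> q" "p \<noteq> r" "p \<noteq> s" "q = r" "q = s" "r = s"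
  shows "Mo4 p q r s = eE * of_nat (Wc (lst4 p q r s) (lst4 p q r s))"
proof -
  have W: "Wc (lst4 p q r s) (lst4 p q r s) = 6" using assms by (simp add: Wc_list L24_def lst4_def)
  have "Mo4 p q r s = Mo4 q q q p" using assms unfolding Mo4_def by (simp add: mult_ac)
  also have "\<dots> = 6 * eE" using assms by (simp add: Bval)
  finally show ?thesis unfolding W by simp
qed

lemma P2:
  assumes "p = q" "p \<noteq> r" "p \<noteq> s" "q \<noteq> r" "q \<noteq> s" "r = s"
  shows "Mo4 p q r s = eE * of_nat (Wc (lst4 p q r s) (lst4 p q r s))"
proof -
  have W: "Wc (lst4 p q r s) (lst4 p q r s) = 4" using assms by (simp add: Wc_list L24_def lst4_def)
  have "Mo4 p q r s = Mo4 p p r r" using assms unfolding Mo4_def by (simp add: mult_ac)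
  also have "\<dots> = 4 * eE" using assms by (simp add: Cval)
  finally show ?thesis unfolding W by simp
qed

lemma P3:
  assumes "p \<noteq> q" "p = r" "p = s" "q \<noteq> r" "q \<noteq> s" "r = s"
  shows "Mo4 p q r s = eE * of_nat (Wc (lst4 p q r s) (lst4 p q r s))"
proof -
  have W: "Wc (lst4 p q r s) (lst4 p q r s) = 6" using assms by (simp add: Wc_list L24_def lst4_def)
  have "Mo4 p q r s = Mo4 p p p q" using assms unfolding Mo4_def by (simp add: mult_ac)
  also have "\<dots> = 6 * eE" using assms by (simp add: Bval)
  finally show ?thesis unfolding W by simp
qed

lemma P4:
  assumes "p \<noteq> q" "p \<noteq> r" "p \<noteq> s" "q \<noteq> r" "q \<noteq> s" "r = s"
  shows "Mo4 p q r s = eE * of_nat (Wc (lst4 p q r s) (lst4 p q r s))"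
proof -
  have W: "Wc (lst4 p q r s) (lst4 p q r s) = 2" using assms by (simp add: Wc_list L24_def lst4_def)
  have "Mo4 p q r s = Mo4 r r p q" using assms unfolding Mo4_def by (simp add: mult_ac)
  also have "\<dots> = 2 * eE" using assms by (simp add: Dval)
  finally show ?thesis unfolding W by simp
qed

lemma P5:
  assumes "p = q" "p = r" "p \<noteq> s" "q = r" "q \<noteq> s" "r \<noteq> s"
  shows "Mo4 p q r s = eE * of_nat (Wc (lst4 p q r s) (lst4 p q r s))"
proof -
  have W: "Wc (lst4 p q r s) (lst4 p q r s) = 6" using assms by (simp add: Wc_list L24_def lst4_def)
  have "Mo4 p q r s = Mo4 p p p s" using assms unfolding Mo4_def by (simp add: mult_ac)
  also have "\<dots> = 6 * eE" using assms by (simp add: Bval)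
  finally show ?thesis unfolding W by simp
qed

lemma P6:
  assumes "p \<noteq> q" "p \<noteq> r" "p = s" "q = r" "q \<noteq> s" "r \<noteq> s"
  shows "Mo4 p q r s = eE * of_nat (Wc (lst4 p q r s) (lst4 p q r s))"
proof -
  have W: "Wc (lst4 p q r s) (lst4 p q r s) = 4" using assms by (simp add: Wc_list L24_def lst4_def)
  have "Mo4 p q r s = Mo4 p p q q" using assms unfolding Mo4_def by (simp add: mult_ac)
  also have "\<dots> = 4 * eE" using assms by (simp add: Cval)
  finally show ?thesis unfolding W by simp
qed

lemma P7:
  assumes "p \<noteq> q" "p \<noteq> r" "p \<noteq> s" "q = r" "q \<noteq> s" "r \<noteq> s"
  shows "Mo4 p q r s = eE * of_nat (Wc (lst4 p q r s) (lst4 p q r s))"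
proof -
  have W: "Wc (lst4 p q r s) (lst4 p q r s) = 2" using assms by (simp add: Wc_list L24_def lst4_def)
  have "Mo4 p q r s = Mo4 q q p s" using assms unfolding Mo4_def by (simp add: mult_ac)
  also have "\<dots> = 2 * eE" using assms by (simp add: Dval)
  finally show ?thesis unfolding W by simp
qed

lemma P8:
  assumes "p \<noteq> q" "p = r" "p \<noteq> s" "q \<noteq> r" "q = s" "r \<noteq> s"
  shows "Mo4 p q r s = eE * of_nat (Wc (lst4 p q r s) (lst4 p q r s))"
proof -
  have W: "Wc (lst4 p q r s) (lst4 p q r s) = 4" using assms by (simp add: Wc_list L24_def lst4_def)
  have "Mo4 p q r s = Mo4 p p q q" using assms unfolding Mo4_def by (simp add: mult_ac)
  also have "\<dots> = 4 * eE" using assms by (simp add: Cval)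
  finally show ?thesis unfolding W by simp
qed

lemma P9:
  assumes "p = q" "p \<noteq> r" "p = s" "q \<noteq> r" "q = s" "r \<noteq> s"
  shows "Mo4 p q r s = eE * of_nat (Wc (lst4 p q r s) (lst4 p q r s))"
proof -
  have W: "Wc (lst4 p q r s) (lst4 p q r s) = 6" using assms by (simp add: Wc_list L24_def lst4_def)
  have "Mo4 p q r s = Mo4 p p p r" using assms unfolding Mo4_def by (simp add: mult_ac)
  also have "\<dots> = 6 * eE" using assms by (simp add: Bval)
  finally show ?thesis unfolding W by simp
qed

lemma P10:
  assumes "p \<noteq> q" "p \<noteq> r" "p \<noteq> s" "q \<noteq> r" "q = s" "r \<noteq> s"
  shows "Mo4 p q r s = eE * of_nat (Wc (lst4 p q r s) (lst4 p q r s))"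
proof -
  have W: "Wc (lst4 p q r s) (lst4 p q r s) = 2" using assms by (simp add: Wc_list L24_def lst4_def)
  have "Mo4 p q r s = Mo4 q q p r" using assms unfolding Mo4_def by (simp add: mult_ac)
  also have "\<dots> = 2 * eE" using assms by (simp add: Dval)
  finally show ?thesis unfolding W by simp
qed

lemma P11:
  assumes "p = q" "p \<noteq> r" "p \<noteq> s" "q \<noteq> r" "q \<noteq> s" "r \<noteq> s"
  shows "Mo4 p q r s = eE * of_nat (Wc (lst4 p q r s) (lst4 p q r s))"
proof -
  have W: "Wc (lst4 p q r s) (lst4 p q r s) = 2" using assms by (simp add: Wc_list L24_def lst4_def)
  have "Mo4 p q r s = Mo4 p p r s" using assms unfolding Mo4_def by (simp add: mult_ac)
  also have "\<dots> = 2 * eE" using assms by (simp add: Dval)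
  finally show ?thesis unfolding W by simp
qed

lemma P12:
  assumes "p \<noteq> q" "p = r" "p \<noteq> s" "q \<noteq> r" "q \<noteq> s" "r \<noteq> s"
  shows "Mo4 p q r s = eE * of_nat (Wc (lst4 p q r s) (lst4 p q r s))"
proof -
  have W: "Wc (lst4 p q r s) (lst4 p q r s) = 2" using assms by (simp add: Wc_list L24_def lst4_def)
  have "Mo4 p q r s = Mo4 p p q s" using assms unfolding Mo4_def by (simp add: mult_ac)
  also have "\<dots> = 2 * eE" using assms by (simp add: Dval)
  finally show ?thesis unfolding W by simp
qed

lemma P13:
  assumes "p \<noteq> q" "p \<noteq> r" "p = s" "q \<noteq> r" "q \<noteq> s" "r \<noteq> s"
  shows "Mo4 p q r s = eE * of_nat (Wc (lst4 p q r s) (lst4 p q r s))"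
proof -
  have W: "Wc (lst4 p q r s) (lst4 p q r s) = 2" using assms by (simp add: Wc_list L24_def lst4_def)
  have "Mo4 p q r s = Mo4 p p q r" using assms unfolding Mo4_def by (simp add: mult_ac)
  also have "\<dots> = 2 * eE" using assms by (simp add: Dval)
  finally show ?thesis unfolding W by simp
qed

lemma P14:
  assumes "p \<noteq> q" "p \<noteq> r" "p \<noteq> s" "q \<noteq> r" "q \<noteq> s" "r \<noteq> s"
  shows "Mo4 p q r s = eE * of_nat (Wc (lst4 p q r s) (lst4 p q r s))"
proof -
  have W: "Wc (lst4 p q r s) (lst4 p q r s) = 1" using assms by (simp add: Wc_list L24_def lst4_def)
  show ?thesis unfolding W using Evl[OF assms] by simp
qed

lemma Mo4_W: "Mo4 p q r s = eE * of_nat (Wc (lst4 p q r s) (lst4 p q r s))"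
  by (cases "p = q"; cases "p = r"; cases "p = s"; cases "q = r"; cases "q = s"; cases "r = s";
      ((rule P0 P1 P2 P3 P4 P5 P6 P7 P8 P9 P10 P11 P12 P13 P14; assumption) | simp))

end

definition qf :: "complex^'n^'n \<Rightarrow> complex^'n \<Rightarrow> complex" where
  "qf A \<psi> = (\<Sum>a\<in>UNIV. \<Sum>b\<in>UNIV. cnj (\<psi> $ a) * A $ a $ b * \<psi> $ b)"

definition Tg :: "(nat \<Rightarrow> nat) \<Rightarrow> (nat \<Rightarrow> complex^'n^'n) \<Rightarrow> complex" where
  "Tg \<sigma> As = (\<Sum>b\<in>PiE {..<4} (\<lambda>_. UNIV). \<Prod>k<4. As k $ b (\<sigma> k) $ b k)"

lemma qf_pair: "qf A \<psi> = (\<Sum>ab\<in>UNIV. cnj (\<psi> $ fst ab) * A $ fst ab $ snd ab * \<psi> $ snd ab)"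
  unfolding qf_def sum.cartesian_product UNIV_Times_UNIV[symmetric] by (simp add: case_prod_beta)

lemma prod_qf:
  "(\<Prod>k<4. qf (As k) \<psi>) =
   (\<Sum>g\<in>PiE {..<4} (\<lambda>_. UNIV). (\<Prod>k<4. As k $ fst (g k) $ snd (g k)) * mnm (\<lambda>k. fst (g k)) (\<lambda>k. snd (g k)) \<psi>)"
proof -
  have "(\<Prod>k<4. qf (As k) \<psi>) = (\<Prod>k<4. \<Sum>ab\<in>UNIV. cnj (\<psi> $ fst ab) * As k $ fst ab $ snd ab * \<psi> $ snd ab)"
    unfolding qf_pair ..
  also have "\<dots> = (\<Sum>g\<in>PiE {..<4} (\<lambda>_. UNIV). \<Prod>k<4. cnj (\<psi> $ fst (g k)) * As k $ fst (g k) $ snd (g k) * \<psi> $ snd (g k))"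
    by (rule prod_sum_PiE) auto
  also have "\<dots> = (\<Sum>g\<in>PiE {..<4} (\<lambda>_. UNIV). (\<Prod>k<4. As k $ fst (g k) $ snd (g k)) * mnm (\<lambda>k. fst (g k)) (\<lambda>k. snd (g k)) \<psi>)"
    unfolding mnm_def prod.distrib[symmetric] by (intro sum.cong refl prod.cong) (auto simp: mult_ac)
  finally show ?thesis .
qed

lemma Wc_sum: "of_nat (Wc a b) = (\<Sum>\<sigma>\<in>{\<sigma>. \<sigma> permutes {..<4::nat}}. if (\<forall>k<4. b (\<sigma> k) = a k) then 1 else (0::complex))"
proof -
  have fin: "finite {\<sigma>. \<sigma> permutes {..<4::nat}}" by (rule finite_permutations) auto
  have "(\<Sum>\<sigma>\<in>{\<sigma>. \<sigma> permutes {..<4::nat}}. if (\<forall>k<4. b (\<sigma> k) = a k) then 1 else (0::complex)) =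
        of_nat (card ({\<sigma>. \<sigma> permutes {..<4::nat}} \<inter> {\<sigma>. \<forall>k<4. b (\<sigma> k) = a k}))"
    using fin by (simp add: sum.If_cases)
  also have "{\<sigma>. \<sigma> permutes {..<4::nat}} \<inter> {\<sigma>. \<forall>k<4. b (\<sigma> k) = a k} = {\<sigma>. \<sigma> permutes {..<4} \<and> (\<forall>k<4. b (\<sigma> k) = a k)}" by auto
  finally show ?thesis unfolding Wc_def by simp
qed

lemma mult_if1: "(a::complex) * (if P then 1 else 0) = (if P then a else 0)" by simp

lemma collapse:
  assumes s: "\<sigma> permutes {..<4::nat}"
  shows "(\<Sum>g\<in>PiE {..<4} (\<lambda>_. UNIV::('n::finite\<times>'n) set). (\<Prod>k<4. As k $ fst (g k) $ snd (g k)) *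
            (if (\<forall>k<4. snd (g (\<sigma> k)) = fst (g k)) then 1 else 0)) = Tg \<sigma> As"
proof -
  have sk: "\<sigma> k < 4" if "k < 4" for k using permutes_in_image[OF s] that by auto
  let ?G = "{g \<in> PiE {..<4} (\<lambda>_. UNIV::('n::finite\<times>'n) set). \<forall>k<4. snd (g (\<sigma> k)) = fst (g k)}"
  have "(\<Sum>g\<in>PiE {..<4} (\<lambda>_. UNIV::('n::finite\<times>'n) set). (\<Prod>k<4. As k $ fst (g k) $ snd (g k)) *
            (if (\<forall>k<4. snd (g (\<sigma> k)) = fst (g k)) then 1 else 0)) =
        (\<Sum>g\<in>PiE {..<4} (\<lambda>_. UNIV::('n::finite\<times>'n) set). if (\<forall>k<4. snd (g (\<sigma> k)) = fst (g k)) then (\<Prod>k<4. As k $ fst (g k) $ snd (g k)) else 0)"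
    by (intro sum.cong refl) (simp only: mult_if1)
  also have "\<dots> = (\<Sum>g\<in>?G. \<Prod>k<4. As k $ fst (g k) $ snd (g k))"
    by (rule sum.inter_filter[symmetric]) (simp add: finite_PiE)
  also have "\<dots> = Tg \<sigma> As" unfolding Tg_def
  proof (rule sum.reindex_bij_witness[where i="\<lambda>b. (\<lambda>k. if k < 4 then (b (\<sigma> k), b k) else undefined)"
                                        and j="\<lambda>g. restrict (\<lambda>k. snd (g k)) {..<4}"])
    fix g assume g: "g \<in> ?G"
    show "(\<lambda>k. if k < 4 then (restrict (\<lambda>k. snd (g k)) {..<4} (\<sigma> k), restrict (\<lambda>k. snd (g k)) {..<4} k) else undefined) = g"
    proof
      fix k show "(if k < 4 then (restrict (\<lambda>k. snd (g k)) {..<4} (\<sigma> k), restrict (\<lambda>k. snd (g k)) {..<4} k) else undefined) = g k"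
        using g sk by (cases "k < 4") (auto simp: PiE_def extensional_def prod_eq_iff)
    qed
    show "restrict (\<lambda>k. snd (g k)) {..<4} \<in> PiE {..<4} (\<lambda>_. UNIV)" by auto
    show "(\<Prod>k<4. As k $ restrict (\<lambda>k. snd (g k)) {..<4} (\<sigma> k) $ restrict (\<lambda>k. snd (g k)) {..<4} k) =
          (\<Prod>k<4. As k $ fst (g k) $ snd (g k))"
      using g sk by (intro prod.cong) auto
  next
    fix b :: "nat \<Rightarrow> 'n" assume b: "b \<in> PiE {..<4} (\<lambda>_. UNIV)"
    show "restrict (\<lambda>k. snd (if k < 4 then (b (\<sigma> k), b k) else undefined)) {..<4} = b"
      using b by (auto simp: restrict_def PiE_def extensional_def fun_eq_iff)
    show "(\<lambda>k. if k < 4 then (b (\<sigma> k), b k) else undefined) \<in> ?G"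
      using sk by (auto simp: PiE_def extensional_def)
  qed
  finally show ?thesis .
qed

lemma lt4: "(k::nat) < 4 \<Longrightarrow> k = 0 \<or> k = 1 \<or> k = 2 \<or> k = 3" by auto

lemma lst4_eq: "k < 4 \<Longrightarrow> lst4 (a 0) (a 1) (a 2) (a 3) k = a k"
  using lt4[of k] by (auto simp: lst4_def)

lemma Wc_cong: "(\<forall>k<4. a k = a' k) \<Longrightarrow> (\<forall>k<4. b k = b' k) \<Longrightarrow> Wc a b = Wc a' b'"
proof -
  assume "\<forall>k<4. a k = a' k" "\<forall>k<4. b k = b' k"
  hence "{\<sigma>. \<sigma> permutes {..<4} \<and> (\<forall>k<4. b (\<sigma> k) = a k)} = {\<sigma>. \<sigma> permutes {..<4} \<and> (\<forall>k<4. b' (\<sigma> k) = a' k)}"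
    using permutes_in_image[of _ "{..<4::nat}"] by auto
  thus ?thesis unfolding Wc_def by simp
qed

lemma mnm_cong: "(\<forall>k<4. a k = a' k) \<Longrightarrow> (\<forall>k<4. b k = b' k) \<Longrightarrow> mnm a b = mnm a' b'"
  unfolding mnm_def by (intro ext prod.cong) auto

context quad
begin

lemma wick_mnm: "integral\<^sup>L M (mnm a b) = eE * of_nat (Wc a b)"
proof (cases "bal a b")
  case True
  let ?l = "lst4 (a 0) (a 1) (a 2) (a 3)"
  have l: "\<forall>k<4. ?l k = a k" using lst4_eq by blast
  have "integral\<^sup>L M (mnm a b) = integral\<^sup>L M (mnm ?l ?l)"
    unfolding mnm_bal[OF True] using mnm_cong[OF l l] by simp
  also have "\<dots> = Mo4 (a 0) (a 1) (a 2) (a 3)" unfolding mnm_lst4 Mo4_def ..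
  also have "\<dots> = eE * of_nat (Wc ?l ?l)" by (rule Mo4_W)
  also have "Wc ?l ?l = Wc a a" by (rule Wc_cong[OF l l])
  also have "\<dots> = Wc a b" using Wc_bal[OF True] by simp
  finally show ?thesis .
next
  case False
  thus ?thesis using E_unbal[OF False] Wc_unbal[OF False] by simp
qed

lemma wick:
  "(\<integral>\<psi>. (\<Prod>k<4. qf (As k) \<psi>) \<partial>M) = eE * (\<Sum>\<sigma>\<in>{\<sigma>. \<sigma> permutes {..<4::nat}}. Tg \<sigma> As)"
proof -
  let ?P = "{\<sigma>. \<sigma> permutes {..<4::nat}}"
  let ?cf = "\<lambda>g. \<Prod>k<4. As k $ fst (g k) $ snd (g k)"
  have int: "integrable M (\<lambda>\<psi>. ?cf g * mnm (\<lambda>k. fst (g k)) (\<lambda>k. snd (g k)) \<psi>)" for g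
    by (intro int_cont continuous_intros mnm_cont)
  have "(\<integral>\<psi>. (\<Prod>k<4. qf (As k) \<psi>) \<partial>M) =
        (\<integral>\<psi>. (\<Sum>g\<in>PiE {..<4} (\<lambda>_. UNIV). ?cf g * mnm (\<lambda>k. fst (g k)) (\<lambda>k. snd (g k)) \<psi>) \<partial>M)"
    unfolding prod_qf ..
  also have "\<dots> = (\<Sum>g\<in>PiE {..<4} (\<lambda>_. UNIV). ?cf g * integral\<^sup>L M (mnm (\<lambda>k. fst (g k)) (\<lambda>k. snd (g k))))"
    by (subst Bochner_Integration.integral_sum[OF int]) simp
  also have "\<dots> = (\<Sum>g\<in>PiE {..<4} (\<lambda>_. UNIV). ?cf g * (eE * (\<Sum>\<sigma>\<in>?P. if (\<forall>k<4. snd (g (\<sigma> k)) = fst (g k)) then 1 else 0)))"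
    unfolding wick_mnm Wc_sum ..
  also have "\<dots> = eE * (\<Sum>\<sigma>\<in>?P. \<Sum>g\<in>PiE {..<4} (\<lambda>_. UNIV). ?cf g * (if (\<forall>k<4. snd (g (\<sigma> k)) = fst (g k)) then 1 else 0))"
  proof -
    have "(\<Sum>g\<in>PiE {..<4} (\<lambda>_. UNIV). ?cf g * (eE * (\<Sum>\<sigma>\<in>?P. if (\<forall>k<4. snd (g (\<sigma> k)) = fst (g k)) then 1 else 0))) =
      eE * (\<Sum>g\<in>PiE {..<4} (\<lambda>_. UNIV). \<Sum>\<sigma>\<in>?P. ?cf g * (if (\<forall>k<4. snd (g (\<sigma> k)) = fst (g k)) then 1 else 0))"
      by (simp only: sum_distrib_left mult.left_commute)
    also have "\<dots> = eE * (\<Sum>\<sigma>\<in>?P. \<Sum>g\<in>PiE {..<4} (\<lambda>_. UNIV). ?cf g * (if (\<forall>k<4. snd (g (\<sigma> k)) = fst (g k)) then 1 else 0))"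
      by (rule arg_cong[where f="\<lambda>u. eE * u"], rule sum.swap)
    finally show ?thesis .
  qed
  also have "\<dots> = eE * (\<Sum>\<sigma>\<in>?P. Tg \<sigma> As)"
    by (rule arg_cong[where f="\<lambda>u. eE * u"], rule sum.cong[OF refl], rule collapse) simp
  finally show ?thesis .
qed

end

lemma sum_P4_list: "(\<Sum>\<sigma>\<in>{\<sigma>. \<sigma> permutes {..<4::nat}}. f \<sigma>) = (\<Sum>xs\<leftarrow>L24. f (pl xs))"
proof -
  have "(\<Sum>\<sigma>\<in>{\<sigma>. \<sigma> permutes {..<4::nat}}. f \<sigma>) = (\<Sum>xs\<in>set L24. f (pl xs))"
    unfolding perms4 by (rule sum.reindex[OF pl_inj, unfolded o_def])
  also have "\<dots> = (\<Sum>xs\<leftarrow>L24. f (pl xs))" by (rule sum.distinct_set_conv_list[OF L24_props(1)])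
  finally show ?thesis .
qed

lemma nest4:
  "(\<Sum>b\<in>PiE {..<4::nat} (\<lambda>_. UNIV::'n::finite set). F b) =
   (\<Sum>v0\<in>UNIV. \<Sum>v1\<in>UNIV. \<Sum>v2\<in>UNIV. \<Sum>v3\<in>UNIV. F (restrict (lst4 v0 v1 v2 v3) {..<4}))"
proof -
  have "(\<Sum>v0\<in>UNIV. \<Sum>v1\<in>UNIV. \<Sum>v2\<in>UNIV. \<Sum>v3\<in>UNIV. F (restrict (lst4 v0 v1 v2 v3) {..<4})) =
        (\<Sum>(v0,v1,v2,v3)\<in>(UNIV::'n set) \<times> (UNIV \<times> (UNIV \<times> UNIV)). F (restrict (lst4 v0 v1 v2 v3) {..<4}))"
    by (simp add: sum.cartesian_product)
  also have "\<dots> = (\<Sum>b\<in>PiE {..<4::nat} (\<lambda>_. UNIV::'n::finite set). F b)"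
  proof (rule sum.reindex_bij_witness[where i="\<lambda>b. (b 0, b 1, b 2, b 3)"
      and j="\<lambda>(v0,v1,v2,v3). restrict (lst4 v0 v1 v2 v3) {..<4}"])
    fix v :: "'n \<times> 'n \<times> 'n \<times> 'n"
    obtain v0 v1 v2 v3 where v: "v = (v0,v1,v2,v3)" by (cases v) auto
    show "(\<lambda>b. (b 0, b 1, b 2, b 3)) ((\<lambda>(v0,v1,v2,v3). restrict (lst4 v0 v1 v2 v3) {..<4}) v) = v"
      unfolding v by (simp add: lst4_def)
    show "(\<lambda>(v0,v1,v2,v3). restrict (lst4 v0 v1 v2 v3) {..<4}) v \<in> PiE {..<4} (\<lambda>_. UNIV)"
      unfolding v by simp
    show "F ((\<lambda>(v0,v1,v2,v3). restrict (lst4 v0 v1 v2 v3) {..<4}) v) = (case v of (v0,v1,v2,v3) \<Rightarrow> F (restrict (lst4 v0 v1 v2 v3) {..<4}))"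
      unfolding v by simp
  next
    fix b :: "nat \<Rightarrow> 'n" assume b: "b \<in> PiE {..<4} (\<lambda>_. UNIV)"
    show "(\<lambda>(v0,v1,v2,v3). restrict (lst4 v0 v1 v2 v3) {..<4}) (b 0, b 1, b 2, b 3) = b"
    proof
      fix k show "(\<lambda>(v0,v1,v2,v3). restrict (lst4 v0 v1 v2 v3) {..<4}) (b 0, b 1, b 2, b 3) k = b k"
        using b lt4[of k] by (cases "k < 4") (auto simp: lst4_def PiE_def extensional_def)
    qed
    show "(b 0, b 1, b 2, b 3) \<in> UNIV \<times> UNIV \<times> UNIV \<times> UNIV" by simp
  qed
  finally show ?thesis ..
qed

lemma TgR:
  assumes s: "\<sigma> permutes {..<4::nat}" and p: "\<pi> permutes {..<4::nat}"
  shows "Tg \<sigma> As = (\<Sum>v0\<in>UNIV. \<Sum>v1\<in>UNIV. \<Sum>v2\<in>UNIV. \<Sum>v3\<in>UNIV.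
            \<Prod>k<4. As k $ lst4 v0 v1 v2 v3 (\<pi> (\<sigma> k)) $ lst4 v0 v1 v2 v3 (\<pi> k))"
proof -
  have sk: "\<sigma> k < 4" if "k < 4" for k using permutes_in_image[OF s] that by auto
  have pk: "\<pi> k < 4" if "k < 4" for k using permutes_in_image[OF p] that by auto
  have ipk: "inv \<pi> k < 4" if "k < 4" for k using permutes_in_image[OF permutes_inv[OF p]] that by auto
  have "Tg \<sigma> As = (\<Sum>b\<in>PiE {..<4} (\<lambda>_. UNIV). \<Prod>k<4. As k $ b (\<pi> (\<sigma> k)) $ b (\<pi> k))"
    unfolding Tg_def
  proof (rule sum.reindex_bij_witness[where j="\<lambda>b. restrict (b \<circ> inv \<pi>) {..<4}" and i="\<lambda>b. restrict (b \<circ> \<pi>) {..<4}"])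
    fix b :: "nat \<Rightarrow> 'a" assume b: "b \<in> PiE {..<4} (\<lambda>_. UNIV)"
    show "restrict (restrict (b \<circ> inv \<pi>) {..<4} \<circ> \<pi>) {..<4} = b"
    proof
      fix k show "restrict (restrict (b \<circ> inv \<pi>) {..<4} \<circ> \<pi>) {..<4} k = b k"
        using b permutes_inverses(2)[OF p] pk by (cases "k < 4") (auto simp: PiE_def extensional_def)
    qed
    show "restrict (b \<circ> inv \<pi>) {..<4} \<in> PiE {..<4} (\<lambda>_. UNIV)" by simp
    show "(\<Prod>k<4. As k $ restrict (b \<circ> inv \<pi>) {..<4} (\<pi> (\<sigma> k)) $ restrict (b \<circ> inv \<pi>) {..<4} (\<pi> k)) = (\<Prod>k<4. As k $ b (\<sigma> k) $ b k)"
      using permutes_inverses(2)[OF p] pk sk by (intro prod.cong refl) auto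
  next
    fix b :: "nat \<Rightarrow> 'a" assume b: "b \<in> PiE {..<4} (\<lambda>_. UNIV)"
    show "restrict (restrict (b \<circ> \<pi>) {..<4} \<circ> inv \<pi>) {..<4} = b"
    proof
      fix k show "restrict (restrict (b \<circ> \<pi>) {..<4} \<circ> inv \<pi>) {..<4} k = b k"
        using b permutes_inverses(1)[OF p] ipk by (cases "k < 4") (auto simp: PiE_def extensional_def)
    qed
    show "restrict (b \<circ> \<pi>) {..<4} \<in> PiE {..<4} (\<lambda>_. UNIV)" by simp
  qed
  also have "\<dots> = (\<Sum>v0\<in>UNIV. \<Sum>v1\<in>UNIV. \<Sum>v2\<in>UNIV. \<Sum>v3\<in>UNIV.
            \<Prod>k<4. As k $ lst4 v0 v1 v2 v3 (\<pi> (\<sigma> k)) $ lst4 v0 v1 v2 v3 (\<pi> k))"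
    unfolding nest4 using sk pk by (intro sum.cong refl prod.cong) auto
  finally show ?thesis .
qed

lemma pl_L24: "xs \<in> set L24 \<Longrightarrow> pl xs permutes {..<4}"
  using L24_props(2) pl_permutes by blast

lemma tr1: "ctrace A = (\<Sum>i\<in>UNIV. A $ i $ i)" unfolding ctrace_def ..
lemma tr2: "ctrace (A ** B) = (\<Sum>i\<in>UNIV. \<Sum>j\<in>UNIV. A $ i $ j * B $ j $ i)"
  unfolding ctrace_def matrix_matrix_mult_def by simp
lemma tr3: "ctrace (A ** (B ** C)) = (\<Sum>i\<in>UNIV. \<Sum>j\<in>UNIV. \<Sum>k\<in>UNIV. A $ i $ j * B $ j $ k * C $ k $ i)"
  unfolding ctrace_def matrix_matrix_mult_def by (simp add: sum_distrib_left mult_ac)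
lemma tr4: "ctrace (A ** (B ** (C ** D))) = (\<Sum>i\<in>UNIV. \<Sum>j\<in>UNIV. \<Sum>k\<in>UNIV. \<Sum>l\<in>UNIV. A $ i $ j * B $ j $ k * C $ k $ l * D $ l $ i)"
  unfolding ctrace_def matrix_matrix_mult_def by (simp add: sum_distrib_left mult_ac)

lemma H1: "(\<Sum>i\<in>I. \<Sum>j\<in>J. f i j) * (\<Sum>k\<in>K. g k) = (\<Sum>i\<in>I. \<Sum>j\<in>J. \<Sum>k\<in>K. f i j * (g k::complex))"
  by (simp only: sum_distrib_right) (simp only: sum_distrib_left)
lemma H2: "(\<Sum>i\<in>I. \<Sum>j\<in>J. \<Sum>k\<in>K. f i j k) * (\<Sum>l\<in>L. g l) = (\<Sum>i\<in>I. \<Sum>j\<in>J. \<Sum>k\<in>K. \<Sum>l\<in>L. f i j k * (g l::complex))"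
  by (simp only: sum_distrib_right) (simp only: sum_distrib_left)
lemma H3: "(\<Sum>i\<in>I. \<Sum>j\<in>J. f i j) * (\<Sum>k\<in>K. \<Sum>l\<in>L. g k l) = (\<Sum>i\<in>I. \<Sum>j\<in>J. \<Sum>k\<in>K. \<Sum>l\<in>L. f i j * (g k l::complex))"
  by (simp only: sum_distrib_right) (simp only: sum_distrib_left)

lemma PT1: "ctrace A * ctrace B * ctrace C * ctrace D =
  (\<Sum>i\<in>UNIV. \<Sum>j\<in>UNIV. \<Sum>k\<in>UNIV. \<Sum>l\<in>UNIV. A $ i $ i * B $ j $ j * C $ k $ k * D $ l $ l)"
proof -
  have 1: "ctrace A * ctrace B = (\<Sum>i\<in>UNIV. \<Sum>j\<in>UNIV. A $ i $ i * B $ j $ j)" unfolding tr1 by (rule sum_product)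
  have 2: "(\<Sum>i\<in>UNIV. \<Sum>j\<in>UNIV. A $ i $ i * B $ j $ j) * ctrace C = (\<Sum>i\<in>UNIV. \<Sum>j\<in>UNIV. \<Sum>k\<in>UNIV. A $ i $ i * B $ j $ j * C $ k $ k)"
    unfolding tr1 by (rule H1)
  have 3: "(\<Sum>i\<in>UNIV. \<Sum>j\<in>UNIV. \<Sum>k\<in>UNIV. A $ i $ i * B $ j $ j * C $ k $ k) * ctrace D = (\<Sum>i\<in>UNIV. \<Sum>j\<in>UNIV. \<Sum>k\<in>UNIV. \<Sum>l\<in>UNIV. A $ i $ i * B $ j $ j * C $ k $ k * D $ l $ l)"
    unfolding tr1 by (rule H2)
  show ?thesis unfolding 1 2 3 ..
qed

lemma PT2: "ctrace (A ** B) * ctrace C * ctrace D =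
  (\<Sum>i\<in>UNIV. \<Sum>j\<in>UNIV. \<Sum>k\<in>UNIV. \<Sum>l\<in>UNIV. A $ i $ j * B $ j $ i * C $ k $ k * D $ l $ l)"
proof -
  have 2: "ctrace (A ** B) * ctrace C = (\<Sum>i\<in>UNIV. \<Sum>j\<in>UNIV. \<Sum>k\<in>UNIV. A $ i $ j * B $ j $ i * C $ k $ k)"
    unfolding tr2 unfolding tr1 by (rule H1)
  have 3: "(\<Sum>i\<in>UNIV. \<Sum>j\<in>UNIV. \<Sum>k\<in>UNIV. A $ i $ j * B $ j $ i * C $ k $ k) * ctrace D = (\<Sum>i\<in>UNIV. \<Sum>j\<in>UNIV. \<Sum>k\<in>UNIV. \<Sum>l\<in>UNIV. A $ i $ j * B $ j $ i * C $ k $ k * D $ l $ l)"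
    unfolding tr1 by (rule H2)
  show ?thesis unfolding 2 3 ..
qed

lemma PT3: "ctrace (A ** B) * ctrace (C ** D) =
  (\<Sum>i\<in>UNIV. \<Sum>j\<in>UNIV. \<Sum>k\<in>UNIV. \<Sum>l\<in>UNIV. A $ i $ j * B $ j $ i * C $ k $ l * D $ l $ k)"
  unfolding tr2 H3 by (simp only: mult.assoc)

lemma PT4: "ctrace (A ** (B ** C)) * ctrace D =
  (\<Sum>i\<in>UNIV. \<Sum>j\<in>UNIV. \<Sum>k\<in>UNIV. \<Sum>l\<in>UNIV. A $ i $ j * B $ j $ k * C $ k $ i * D $ l $ l)"
  unfolding tr3 unfolding tr1 by (rule H2)

lemma PT5: "ctrace (A ** (B ** (C ** D))) =
  (\<Sum>i\<in>UNIV. \<Sum>j\<in>UNIV. \<Sum>k\<in>UNIV. \<Sum>l\<in>UNIV. A $ i $ j * B $ j $ k * C $ k $ l * D $ l $ i)"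
  unfolding tr4 ..

lemma T_0: "Tg (pl [0,1,2,3]) (lst4 A B C D) = ctrace A * ctrace B * ctrace C * ctrace D"
proof -
  have p1: "pl [0,1,2,3] permutes {..<4}" by (rule pl_L24) (simp add: L24_def)
  have p2: "pl [0,1,2,3] permutes {..<4}" by (rule pl_L24) (simp add: L24_def)
  show ?thesis unfolding TgR[OF p1 p2] PT1 by (simp add: prod4 pl_def lst4_def mult_ac)
qed

lemma T_1: "Tg (pl [0,1,3,2]) (lst4 A B C D) = ctrace (C ** D) * ctrace A * ctrace B"
proof -
  have p1: "pl [0,1,3,2] permutes {..<4}" by (rule pl_L24) (simp add: L24_def)
  have p2: "pl [2,3,1,0] permutes {..<4}" by (rule pl_L24) (simp add: L24_def)
  show ?thesis unfolding TgR[OF p1 p2] PT2 by (simp add: prod4 pl_def lst4_def mult_ac)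
qed

lemma T_2: "Tg (pl [0,2,1,3]) (lst4 A B C D) = ctrace (B ** C) * ctrace A * ctrace D"
proof -
  have p1: "pl [0,2,1,3] permutes {..<4}" by (rule pl_L24) (simp add: L24_def)
  have p2: "pl [2,1,0,3] permutes {..<4}" by (rule pl_L24) (simp add: L24_def)
  show ?thesis unfolding TgR[OF p1 p2] PT2 by (simp add: prod4 pl_def lst4_def mult_ac)
qed

lemma T_3: "Tg (pl [0,2,3,1]) (lst4 A B C D) = ctrace (B ** (D ** C)) * ctrace A"
proof -
  have p1: "pl [0,2,3,1] permutes {..<4}" by (rule pl_L24) (simp add: L24_def)
  have p2: "pl [3,1,0,2] permutes {..<4}" by (rule pl_L24) (simp add: L24_def)
  show ?thesis unfolding TgR[OF p1 p2] PT4 by (simp add: prod4 pl_def lst4_def mult_ac)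
qed

lemma T_4: "Tg (pl [0,3,1,2]) (lst4 A B C D) = ctrace (B ** (C ** D)) * ctrace A"
proof -
  have p1: "pl [0,3,1,2] permutes {..<4}" by (rule pl_L24) (simp add: L24_def)
  have p2: "pl [3,1,2,0] permutes {..<4}" by (rule pl_L24) (simp add: L24_def)
  show ?thesis unfolding TgR[OF p1 p2] PT4 by (simp add: prod4 pl_def lst4_def mult_ac)
qed

lemma T_5: "Tg (pl [0,3,2,1]) (lst4 A B C D) = ctrace (B ** D) * ctrace A * ctrace C"
proof -
  have p1: "pl [0,3,2,1] permutes {..<4}" by (rule pl_L24) (simp add: L24_def)
  have p2: "pl [2,1,3,0] permutes {..<4}" by (rule pl_L24) (simp add: L24_def)
  show ?thesis unfolding TgR[OF p1 p2] PT2 by (simp add: prod4 pl_def lst4_def mult_ac)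
qed

lemma T_6: "Tg (pl [1,0,2,3]) (lst4 A B C D) = ctrace (A ** B) * ctrace C * ctrace D"
proof -
  have p1: "pl [1,0,2,3] permutes {..<4}" by (rule pl_L24) (simp add: L24_def)
  have p2: "pl [1,0,2,3] permutes {..<4}" by (rule pl_L24) (simp add: L24_def)
  show ?thesis unfolding TgR[OF p1 p2] PT2 by (simp add: prod4 pl_def lst4_def mult_ac)
qed

lemma T_7: "Tg (pl [1,0,3,2]) (lst4 A B C D) = ctrace (A ** B) * ctrace (C ** D)"
proof -
  have p1: "pl [1,0,3,2] permutes {..<4}" by (rule pl_L24) (simp add: L24_def)
  have p2: "pl [1,0,3,2] permutes {..<4}" by (rule pl_L24) (simp add: L24_def)
  show ?thesis unfolding TgR[OF p1 p2] PT3 by (simp add: prod4 pl_def lst4_def mult_ac)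
qed

lemma T_8: "Tg (pl [1,2,0,3]) (lst4 A B C D) = ctrace (A ** (C ** B)) * ctrace D"
proof -
  have p1: "pl [1,2,0,3] permutes {..<4}" by (rule pl_L24) (simp add: L24_def)
  have p2: "pl [1,0,2,3] permutes {..<4}" by (rule pl_L24) (simp add: L24_def)
  show ?thesis unfolding TgR[OF p1 p2] PT4 by (simp add: prod4 pl_def lst4_def mult_ac)
qed

lemma T_9: "Tg (pl [1,2,3,0]) (lst4 A B C D) = ctrace (A ** (D ** (C ** B)))"
proof -
  have p1: "pl [1,2,3,0] permutes {..<4}" by (rule pl_L24) (simp add: L24_def)
  have p2: "pl [1,0,3,2] permutes {..<4}" by (rule pl_L24) (simp add: L24_def)
  show ?thesis unfolding TgR[OF p1 p2] PT5 by (simp add: prod4 pl_def lst4_def mult_ac)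
qed

lemma T_10: "Tg (pl [1,3,0,2]) (lst4 A B C D) = ctrace (A ** (C ** (D ** B)))"
proof -
  have p1: "pl [1,3,0,2] permutes {..<4}" by (rule pl_L24) (simp add: L24_def)
  have p2: "pl [1,0,2,3] permutes {..<4}" by (rule pl_L24) (simp add: L24_def)
  show ?thesis unfolding TgR[OF p1 p2] PT5 by (simp add: prod4 pl_def lst4_def mult_ac)
qed

lemma T_11: "Tg (pl [1,3,2,0]) (lst4 A B C D) = ctrace (A ** (D ** B)) * ctrace C"
proof -
  have p1: "pl [1,3,2,0] permutes {..<4}" by (rule pl_L24) (simp add: L24_def)
  have p2: "pl [1,0,3,2] permutes {..<4}" by (rule pl_L24) (simp add: L24_def)
  show ?thesis unfolding TgR[OF p1 p2] PT4 by (simp add: prod4 pl_def lst4_def mult_ac)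
qed

lemma T_12: "Tg (pl [2,0,1,3]) (lst4 A B C D) = ctrace (A ** (B ** C)) * ctrace D"
proof -
  have p1: "pl [2,0,1,3] permutes {..<4}" by (rule pl_L24) (simp add: L24_def)
  have p2: "pl [1,2,0,3] permutes {..<4}" by (rule pl_L24) (simp add: L24_def)
  show ?thesis unfolding TgR[OF p1 p2] PT4 by (simp add: prod4 pl_def lst4_def mult_ac)
qed

lemma T_13: "Tg (pl [2,0,3,1]) (lst4 A B C D) = ctrace (A ** (B ** (D ** C)))"
proof -
  have p1: "pl [2,0,3,1] permutes {..<4}" by (rule pl_L24) (simp add: L24_def)
  have p2: "pl [1,2,0,3] permutes {..<4}" by (rule pl_L24) (simp add: L24_def)
  show ?thesis unfolding TgR[OF p1 p2] PT5 by (simp add: prod4 pl_def lst4_def mult_ac)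
qed

lemma T_14: "Tg (pl [2,1,0,3]) (lst4 A B C D) = ctrace (A ** C) * ctrace B * ctrace D"
proof -
  have p1: "pl [2,1,0,3] permutes {..<4}" by (rule pl_L24) (simp add: L24_def)
  have p2: "pl [1,2,0,3] permutes {..<4}" by (rule pl_L24) (simp add: L24_def)
  show ?thesis unfolding TgR[OF p1 p2] PT2 by (simp add: prod4 pl_def lst4_def mult_ac)
qed

lemma T_15: "Tg (pl [2,1,3,0]) (lst4 A B C D) = ctrace (A ** (D ** C)) * ctrace B"
proof -
  have p1: "pl [2,1,3,0] permutes {..<4}" by (rule pl_L24) (simp add: L24_def)
  have p2: "pl [1,3,0,2] permutes {..<4}" by (rule pl_L24) (simp add: L24_def)
  show ?thesis unfolding TgR[OF p1 p2] PT4 by (simp add: prod4 pl_def lst4_def mult_ac)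
qed

lemma T_16: "Tg (pl [2,3,0,1]) (lst4 A B C D) = ctrace (A ** C) * ctrace (B ** D)"
proof -
  have p1: "pl [2,3,0,1] permutes {..<4}" by (rule pl_L24) (simp add: L24_def)
  have p2: "pl [1,3,0,2] permutes {..<4}" by (rule pl_L24) (simp add: L24_def)
  show ?thesis unfolding TgR[OF p1 p2] PT3 by (simp add: prod4 pl_def lst4_def mult_ac)
qed

lemma T_17: "Tg (pl [2,3,1,0]) (lst4 A B C D) = ctrace (A ** (D ** (B ** C)))"
proof -
  have p1: "pl [2,3,1,0] permutes {..<4}" by (rule pl_L24) (simp add: L24_def)
  have p2: "pl [1,3,0,2] permutes {..<4}" by (rule pl_L24) (simp add: L24_def)
  show ?thesis unfolding TgR[OF p1 p2] PT5 by (simp add: prod4 pl_def lst4_def mult_ac)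
qed

lemma T_18: "Tg (pl [3,0,1,2]) (lst4 A B C D) = ctrace (A ** (B ** (C ** D)))"
proof -
  have p1: "pl [3,0,1,2] permutes {..<4}" by (rule pl_L24) (simp add: L24_def)
  have p2: "pl [1,2,3,0] permutes {..<4}" by (rule pl_L24) (simp add: L24_def)
  show ?thesis unfolding TgR[OF p1 p2] PT5 by (simp add: prod4 pl_def lst4_def mult_ac)
qed

lemma T_19: "Tg (pl [3,0,2,1]) (lst4 A B C D) = ctrace (A ** (B ** D)) * ctrace C"
proof -
  have p1: "pl [3,0,2,1] permutes {..<4}" by (rule pl_L24) (simp add: L24_def)
  have p2: "pl [1,2,3,0] permutes {..<4}" by (rule pl_L24) (simp add: L24_def)
  show ?thesis unfolding TgR[OF p1 p2] PT4 by (simp add: prod4 pl_def lst4_def mult_ac)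
qed

lemma T_20: "Tg (pl [3,1,0,2]) (lst4 A B C D) = ctrace (A ** (C ** D)) * ctrace B"
proof -
  have p1: "pl [3,1,0,2] permutes {..<4}" by (rule pl_L24) (simp add: L24_def)
  have p2: "pl [1,3,2,0] permutes {..<4}" by (rule pl_L24) (simp add: L24_def)
  show ?thesis unfolding TgR[OF p1 p2] PT4 by (simp add: prod4 pl_def lst4_def mult_ac)
qed

lemma T_21: "Tg (pl [3,1,2,0]) (lst4 A B C D) = ctrace (A ** D) * ctrace B * ctrace C"
proof -
  have p1: "pl [3,1,2,0] permutes {..<4}" by (rule pl_L24) (simp add: L24_def)
  have p2: "pl [1,2,3,0] permutes {..<4}" by (rule pl_L24) (simp add: L24_def)
  show ?thesis unfolding TgR[OF p1 p2] PT2 by (simp add: prod4 pl_def lst4_def mult_ac)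
qed

lemma T_22: "Tg (pl [3,2,0,1]) (lst4 A B C D) = ctrace (A ** (C ** (B ** D)))"
proof -
  have p1: "pl [3,2,0,1] permutes {..<4}" by (rule pl_L24) (simp add: L24_def)
  have p2: "pl [1,3,2,0] permutes {..<4}" by (rule pl_L24) (simp add: L24_def)
  show ?thesis unfolding TgR[OF p1 p2] PT5 by (simp add: prod4 pl_def lst4_def mult_ac)
qed

lemma T_23: "Tg (pl [3,2,1,0]) (lst4 A B C D) = ctrace (A ** D) * ctrace (B ** C)"
proof -
  have p1: "pl [3,2,1,0] permutes {..<4}" by (rule pl_L24) (simp add: L24_def)
  have p2: "pl [1,3,2,0] permutes {..<4}" by (rule pl_L24) (simp add: L24_def)
  show ?thesis unfolding TgR[OF p1 p2] PT3 by (simp add: prod4 pl_def lst4_def mult_ac)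
qed

definition T24 :: "complex^'n^'n \<Rightarrow> complex^'n^'n \<Rightarrow> complex^'n^'n \<Rightarrow> complex^'n^'n \<Rightarrow> complex" where
  "T24 A B C D = (ctrace A * ctrace B * ctrace C * ctrace D) + (ctrace (C ** D) * ctrace A * ctrace B) + (ctrace (B ** C) * ctrace A * ctrace D) + (ctrace (B ** (D ** C)) * ctrace A) + (ctrace (B ** (C ** D)) * ctrace A) + (ctrace (B ** D) * ctrace A * ctrace C) + (ctrace (A ** B) * ctrace C * ctrace D) + (ctrace (A ** B) * ctrace (C ** D)) + (ctrace (A ** (C ** B)) * ctrace D) + (ctrace (A ** (D ** (C ** B)))) + (ctrace (A ** (C ** (D ** B)))) + (ctrace (A ** (D ** B)) * ctrace C) + (ctrace (A ** (B ** C)) * ctrace D) + (ctrace (A ** (B ** (D ** C)))) + (ctrace (A ** C) * ctrace B * ctrace D) + (ctrace (A ** (D ** C)) * ctrace B) + (ctrace (A ** C) * ctrace (B ** D)) + (ctrace (A ** (D ** (B ** C)))) + (ctrace (A ** (B ** (C ** D)))) + (ctrace (A ** (B ** D)) * ctrace C) + (ctrace (A ** (C ** D)) * ctrace B) + (ctrace (A ** D) * ctrace B * ctrace C) + (ctrace (A ** (C ** (B ** D)))) + (ctrace (A ** D) * ctrace (B ** C))"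

lemma sumT: "(\<Sum>xs\<leftarrow>L24. Tg (pl xs) (lst4 A B C D)) = T24 A B C D"
  unfolding T24_def L24_def by (simp only: list.map sum_list.Cons sum_list.Nil add.assoc add_0_right T_0 T_1 T_2 T_3 T_4 T_5 T_6 T_7 T_8 T_9 T_10 T_11 T_12 T_13 T_14 T_15 T_16 T_17 T_18 T_19 T_20 T_21 T_22 T_23)

context quad
begin

lemma wick4: "(\<integral>\<psi>. qf A \<psi> * qf B \<psi> * qf C \<psi> * qf D \<psi> \<partial>M) = eE * T24 A B C D"
proof -
  have "(\<integral>\<psi>. qf A \<psi> * qf B \<psi> * qf C \<psi> * qf D \<psi> \<partial>M) = (\<integral>\<psi>. (\<Prod>k<4. qf (lst4 A B C D k) \<psi>) \<partial>M)"
    by (simp add: prod4 lst4_def)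
  also have "\<dots> = eE * T24 A B C D" unfolding wick sum_P4_list sumT ..
  finally show ?thesis .
qed

end

lemma ctrace_adj: "ctrace (cadjoint A) = cnj (ctrace A)"
  unfolding ctrace_def cadjoint_def by simp

lemma ctrace_adj2: "ctrace (cadjoint A ** cadjoint A) = cnj (ctrace (A ** A))"
  unfolding ctrace_def cadjoint_def matrix_matrix_mult_def by (simp add: mult.commute)

lemma ctrace_one: "ctrace (mat 1 :: complex^'n^'n) = of_nat CARD('n)"
  unfolding ctrace_def mat_def by simp

lemma unitary_simps:
  assumes "unitary X"
  shows "X ** cadjoint X = mat 1" "cadjoint X ** X = mat 1"
        "X ** (cadjoint X ** Y) = Y" "cadjoint X ** (X ** Y) = Y"
  using assms unfolding unitary_def by (auto simp: matrix_mul_assoc)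

lemma T24_F:
  fixes X :: "complex^'n^'n"
  assumes "unitary X"
  shows "T24 X (cadjoint X) (mat 1) (mat 1) =
    (of_nat CARD('n) + 2) * (of_nat CARD('n) + 3) * (ctrace X * cnj (ctrace X) + of_nat CARD('n))"
  unfolding T24_def
  by (simp add: unitary_simps[OF assms] ctrace_adj ctrace_adj2 ctrace_one algebra_simps)

lemma T24_E4:
  fixes X :: "complex^'n^'n"
  assumes "unitary X"
  shows "T24 X X (cadjoint X) (cadjoint X) =
    (ctrace (X ** X) + ctrace X ^ 2) * cnj (ctrace (X ** X) + ctrace X ^ 2)
    + 2 * of_nat CARD('n) * (of_nat CARD('n) + 3) + 4 * (of_nat CARD('n) + 2) * (ctrace X * cnj (ctrace X))"
  unfolding T24_def
  by (simp add: unitary_simps[OF assms] ctrace_adj ctrace_adj2 ctrace_one algebra_simps power2_eq_square)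

lemma T24_N:
  shows "T24 (mat 1) (mat 1) (mat 1) (mat 1 :: complex^'n^'n) =
    of_nat CARD('n) * (of_nat CARD('n) + 1) * (of_nat CARD('n) + 2) * (of_nat CARD('n) + 3)"
  unfolding T24_def by (simp add: ctrace_one algebra_simps power2_eq_square)

lemma qf_braket: "braket \<psi> X = qf X \<psi>"
  unfolding braket_def qf_def matrix_vector_mult_def by (simp add: sum_distrib_left mult.assoc)

lemma qf_adj: "cnj (qf X \<psi>) = qf (cadjoint X) \<psi>"
proof -
  have "cnj (qf X \<psi>) = (\<Sum>a\<in>UNIV. \<Sum>b\<in>UNIV. cnj (\<psi> $ b) * cnj (X $ a $ b) * \<psi> $ a)"
    unfolding qf_def by (simp add: mult_ac)
  also have "\<dots> = (\<Sum>b\<in>UNIV. \<Sum>a\<in>UNIV. cnj (\<psi> $ b) * cnj (X $ a $ b) * \<psi> $ a)" by (rule sum.swap)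
  also have "\<dots> = qf (cadjoint X) \<psi>" unfolding qf_def cadjoint_def by simp
  finally show ?thesis .
qed

lemma qf_one: "norm \<psi> = 1 \<Longrightarrow> qf (mat 1) \<psi> = 1"
proof -
  assume n: "norm \<psi> = 1"
  have h: "(\<Sum>b\<in>UNIV. cnj (\<psi> $ a) * (if a = b then 1 else 0) * \<psi> $ b) = cnj (\<psi> $ a) * \<psi> $ a" for a
  proof -
    have "(\<Sum>b\<in>UNIV. cnj (\<psi> $ a) * (if a = b then 1 else 0) * \<psi> $ b) = (\<Sum>b\<in>UNIV. if a = b then cnj (\<psi> $ a) * \<psi> $ b else 0)"
      by (rule sum.cong) auto
    thus ?thesis by simp
  qed
  have "qf (mat 1) \<psi> = cinner \<psi> \<psi>"
    unfolding qf_def cinner_def mat_def by (simp only: vec_lambda_beta h)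
  also have "\<dots> = complex_of_real (norm \<psi> ^ 2)" by (rule norm_sq_cinner[symmetric])
  finally show ?thesis using n by simp
qed

lemma qf_cont[continuous_intros]: "continuous_on UNIV (qf A)"
  unfolding qf_def by (intro continuous_intros)

lemma four_distinct:
  assumes "CARD('n) \<ge> 4"
  obtains x y z w :: "'n::finite" where "distinct [x,y,z,w]"
proof -
  obtain T :: "'n set" where T: "card T = 4" "finite T"
    using obtain_subset_with_card_n[of 4 "UNIV::'n set"] assms by auto
  obtain xs where xs: "set xs = T" "distinct xs" using finite_distinct_list[OF T(2)] by blast
  have l: "length xs = 4" using distinct_card[OF xs(2)] xs(1) T(1) by simp
  obtain a b c e where "xs = [a,b,c,e]" using l by (auto simp: numeral_eq_Suc length_Suc_conv)
  thus ?thesis using that xs(2) by metis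
qed

context quad
begin

lemma normalization: "eE * (of_nat CARD('n) * (of_nat CARD('n) + 1) * (of_nat CARD('n) + 2) * (of_nat CARD('n) + 3)) = 1"
proof -
  interpret prob_space M by (rule prob)
  have "(\<integral>\<psi>. qf (mat 1) \<psi> * qf (mat 1) \<psi> * qf (mat 1) \<psi> * qf (mat 1) \<psi> \<partial>M) = (\<integral>\<psi>. 1 \<partial>M)"
    by (rule Bochner_Integration.integral_cong) (auto simp: space_M qf_one)
  also have "\<dots> = (1::complex)" by (simp add: prob_space)
  finally show ?thesis unfolding wick4 T24_N by simp
qed

lemma F_val:
  assumes "unitary X"
  shows "complex_of_real (\<integral>\<psi>. cmod (braket \<psi> X) ^ 2 \<partial>M) =
    eE * ((of_nat CARD('n) + 2) * (of_nat CARD('n) + 3) * (ctrace X * cnj (ctrace X) + of_nat CARD('n)))"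
proof -
  have "complex_of_real (\<integral>\<psi>. cmod (braket \<psi> X) ^ 2 \<partial>M) = (\<integral>\<psi>. complex_of_real (cmod (braket \<psi> X) ^ 2) \<partial>M)"
    by (rule integral_complex_of_real[symmetric])
  also have "\<dots> = (\<integral>\<psi>. qf X \<psi> * qf (cadjoint X) \<psi> * qf (mat 1) \<psi> * qf (mat 1) \<psi> \<partial>M)"
    by (rule Bochner_Integration.integral_cong)
       (auto simp: space_M qf_one qf_braket complex_norm_square qf_adj[symmetric] simp del: of_real_power)
  also have "\<dots> = eE * T24 X (cadjoint X) (mat 1) (mat 1)" by (rule wick4)
  finally show ?thesis unfolding T24_F[OF assms] .
qed

lemma E4_val:
  assumes "unitary X"
  shows "complex_of_real (\<integral>\<psi>. cmod (braket \<psi> X) ^ 4 \<partial>M) =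
    eE * ((ctrace (X ** X) + ctrace X ^ 2) * cnj (ctrace (X ** X) + ctrace X ^ 2)
    + 2 * of_nat CARD('n) * (of_nat CARD('n) + 3) + 4 * (of_nat CARD('n) + 2) * (ctrace X * cnj (ctrace X)))"
proof -
  have "complex_of_real (\<integral>\<psi>. cmod (braket \<psi> X) ^ 4 \<partial>M) = (\<integral>\<psi>. complex_of_real (cmod (braket \<psi> X) ^ 4) \<partial>M)"
    by (rule integral_complex_of_real[symmetric])
  also have "\<dots> = (\<integral>\<psi>. qf X \<psi> * qf X \<psi> * qf (cadjoint X) \<psi> * qf (cadjoint X) \<psi> \<partial>M)"
  proof (rule Bochner_Integration.integral_cong[OF refl])
    fix \<psi>
    have p: "cmod (braket \<psi> X) ^ 4 = (cmod (braket \<psi> X) ^ 2) ^ 2" by simp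
    have "complex_of_real (cmod (braket \<psi> X) ^ 4) = (complex_of_real (cmod (braket \<psi> X) ^ 2)) ^ 2"
      unfolding p by (simp only: of_real_power)
    also have "\<dots> = qf X \<psi> * qf X \<psi> * qf (cadjoint X) \<psi> * qf (cadjoint X) \<psi>"
      unfolding complex_norm_square qf_braket qf_adj by (simp add: power2_eq_square mult_ac)
    finally show "complex_of_real (cmod (braket \<psi> X) ^ 4) = qf X \<psi> * qf X \<psi> * qf (cadjoint X) \<psi> * qf (cadjoint X) \<psi>" .
  qed
  also have "\<dots> = eE * T24 X X (cadjoint X) (cadjoint X)" by (rule wick4)
  finally show ?thesis unfolding T24_E4[OF assms] .
qed

end

context ism
begin

lemma variance_nonneg:
  fixes f :: "complex^'n \<Rightarrow> real"
  assumes "continuous_on UNIV f"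
  shows "(integral\<^sup>L M f)^2 \<le> (\<integral>\<psi>. f \<psi> ^ 2 \<partial>M)"
proof -
  interpret prob_space M by (rule prob)
  define c where "c = integral\<^sup>L M f"
  have i1: "integrable M f" by (rule int_cont[OF assms])
  have i2: "integrable M (\<lambda>\<psi>. f \<psi> ^ 2)" by (intro int_cont continuous_intros assms)
  have "0 \<le> (\<integral>\<psi>. (f \<psi> - c) ^ 2 \<partial>M)" by (rule integral_nonneg_AE) auto
  also have "(\<integral>\<psi>. (f \<psi> - c) ^ 2 \<partial>M) = (\<integral>\<psi>. f \<psi> ^ 2 - 2 * c * f \<psi> + c ^ 2 \<partial>M)"
    by (simp add: power2_diff algebra_simps)
  also have "\<dots> = (\<integral>\<psi>. f \<psi> ^ 2 \<partial>M) - 2 * c * c + c ^ 2"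
    using i1 i2 by (simp add: c_def prob_space)
  finally show ?thesis unfolding c_def by (simp add: power2_eq_square)
qed

end

theorem lemma2:
  fixes X :: "complex^'n^'n" and M :: "(complex^'n) measure"
  assumes "CARD('n) \<ge> 4"
    and "unitary X"
    and "unitarily_invariant_sphere_measure M"
  defines "d \<equiv> real CARD('n)"
    and "F \<equiv> integral\<^sup>L M (\<lambda>\<psi>. cmod (braket \<psi> X) ^ 2)"
    and "D \<equiv> sqrt (integral\<^sup>L M (\<lambda>\<psi>. cmod (braket \<psi> X) ^ 4) - (integral\<^sup>L M (\<lambda>\<psi>. cmod (braket \<psi> X) ^ 2)) ^ 2)"
    and "P \<equiv> cmod (ctrace X)"
    and "Q \<equiv> cmod (ctrace (X ** X) + (ctrace X) ^ 2)"
  shows "P ^ 2 = d * (d + 1) * F - d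
     \<and> Q ^ 2 = d * (d + 1) * (d + 2) * (d + 3) * (D ^ 2 + F ^ 2) - 2 * d * (d + 3) - 4 * (d + 2) * P ^ 2"
proof -
  interpret ism M using assms(3) by unfold_locales
  obtain x y z w :: 'n where dxyz: "distinct [x,y,z,w]" using four_distinct assms(1) by blast
  interpret quad M x y z w using dxyz by unfold_locales
  define E4 where "E4 = integral\<^sup>L M (\<lambda>\<psi>. cmod (braket \<psi> X) ^ 4)"
  have d4: "d \<ge> 4" using assms(1) unfolding d_def by simp
  have cd: "(of_nat CARD('n) :: complex) = complex_of_real d" unfolding d_def by simp
  define e where "e = 1 / (d * (d + 1) * (d + 2) * (d + 3))"
  have eE: "eE = complex_of_real e"
  proof -
    define r where "r = d * (d + 1) * (d + 2) * (d + 3)"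
    have h: "eE * complex_of_real r = 1" using normalization unfolding cd r_def by simp
    have "r \<noteq> 0" using d4 unfolding r_def by simp
    hence nz: "complex_of_real r \<noteq> 0" by simp
    have "eE = 1 / complex_of_real r" using h nz by (simp add: eq_divide_eq)
    thus ?thesis unfolding e_def r_def by simp
  qed
  have P2: "ctrace X * cnj (ctrace X) = complex_of_real (P ^ 2)"
    unfolding P_def complex_norm_square ..
  have Q2: "(ctrace (X ** X) + ctrace X ^ 2) * cnj (ctrace (X ** X) + ctrace X ^ 2) = complex_of_real (Q ^ 2)"
    unfolding Q_def complex_norm_square ..
  have Fr: "F = e * ((d + 2) * (d + 3) * (P ^ 2 + d))"
  proof -
    have "complex_of_real F = complex_of_real (e * ((d + 2) * (d + 3) * (P ^ 2 + d)))"
      unfolding F_def F_val[OF assms(2)] eE cd P2 by simp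
    thus ?thesis using of_real_eq_iff by blast
  qed
  have E4r: "E4 = e * (Q ^ 2 + 2 * d * (d + 3) + 4 * (d + 2) * P ^ 2)"
  proof -
    have "complex_of_real E4 = complex_of_real (e * (Q ^ 2 + 2 * d * (d + 3) + 4 * (d + 2) * P ^ 2))"
      unfolding E4_def E4_val[OF assms(2)] eE cd P2 Q2 by simp
    thus ?thesis using of_real_eq_iff by blast
  qed
  have var: "F ^ 2 \<le> E4"
  proof -
    have c: "continuous_on UNIV (\<lambda>\<psi>. cmod (braket \<psi> X) ^ 2)"
      unfolding qf_braket by (intro continuous_intros)
    have "F ^ 2 \<le> (\<integral>\<psi>. (cmod (braket \<psi> X) ^ 2) ^ 2 \<partial>M)" unfolding F_def by (rule variance_nonneg[OF c])
    thus ?thesis unfolding E4_def by (simp flip: power_mult)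
  qed
  have DF: "D ^ 2 + F ^ 2 = E4"
    unfolding D_def using var unfolding E4_def F_def by simp
  have dne: "d \<noteq> 0" "d + 1 \<noteq> 0" "d + 2 \<noteq> 0" "d + 3 \<noteq> 0" using d4 by auto
  have er: "e * (d * (d + 1) * (d + 2) * (d + 3)) = 1" unfolding e_def using dne by simp
  show ?thesis
  proof
    have "d * (d + 1) * F = (e * (d * (d + 1) * (d + 2) * (d + 3))) * (P ^ 2 + d)"
      unfolding Fr by (simp add: algebra_simps)
    thus "P ^ 2 = d * (d + 1) * F - d" unfolding er by simp
    have "d * (d + 1) * (d + 2) * (d + 3) * (D ^ 2 + F ^ 2) = (e * (d * (d + 1) * (d + 2) * (d + 3))) * (Q ^ 2 + 2 * d * (d + 3) + 4 * (d + 2) * P ^ 2)"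
      unfolding DF E4r by (simp add: algebra_simps)
    thus "Q ^ 2 = d * (d + 1) * (d + 2) * (d + 3) * (D ^ 2 + F ^ 2) - 2 * d * (d + 3) - 4 * (d + 2) * P ^ 2"
      unfolding er by simp
  qed
qed

end
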